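(* With $\alpha=(1+\sqrt5)/2$, $\beta=(1-\sqrt5)/2$: $$\sum_{k=1}^\infty\frac{L_k}{2^{k+2}(2k-1)k^2(2k+1)}=1-\frac{\pi^2}{48}+\frac14\ln^22-\frac12\ln^2\alpha-\frac{1}{2\alpha^2\sqrt{2\alpha}}\operatorname{arctanh}\Big(\sqrt{\tfrac\alpha2}\Big)-\frac{\alpha^2\sqrt\alpha}{2\sqrt2}\arctan\Big(\sqrt{\tfrac1{2\alpha}}\Big),$$ $$\sum_{k=1}^\infty\frac{L_{3k}}{5^k(2k-1)(2k)^2(2k+1)}=1-\frac{\pi^2}{48}+\frac12\ln^22-\frac32\ln^2\alpha-\frac12\ln2\ln5+\frac14\ln^25+\frac14\operatorname{Li}_2\Big(-\frac14\Big)$$ $$\qquad-\frac{1}{\alpha^3\sqrt{5\alpha}}\operatorname{arctanh}\Big(\frac{\alpha\sqrt\alpha}{\sqrt5}\Big)-\frac{\alpha^3\sqrt\alpha}{\sqrt5}\arctan\Big(\frac{1}{\alpha\sqrt{5\alpha}}\Big);$$ for every even integer $r\ge0$, $$\sum_{k=1}^\infty\frac{L_{rk}}{L_r^k(2k-1)(2k)^2(2k+1)}=1-\frac{\pi^2}{24}-\frac14r^2\ln^2\alpha+\frac14\ln^2(L_r)-\frac12\sqrt{\frac{1}{\alpha^{3r}L_r}}\operatorname{arctanh}\Big(\sqrt{\frac{\alpha^r}{L_r}}\Big)-\frac12\sqrt{\frac{\alpha^{3r}}{L_r}}\operatorname{arctanh}\Big(\sqrt{\frac{1}{\alpha^rL_r}}\Big);$$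 $$\sum_{k=1}^\infty\frac{L_{2k}}{5^k(4k-1)(4k)^2(4k+1)}+\sum_{k=1}^\infty\frac{F_{2k-1}}{5^{k-1}(4k-3)(4k-2)^2(4k-1)}=1-\frac{\pi^2}{24}+\frac1{16}\ln^25-\frac14\ln^2\alpha$$ $$\qquad-\frac{1}{2\sqrt{\sqrt5}}\left(\frac{1}{\alpha\sqrt\alpha}\operatorname{arctanh}\Big(\sqrt{\frac{\alpha}{\sqrt5}}\Big)+\alpha\sqrt\alpha\,\operatorname{arctanh}\Big(\sqrt{\frac{1}{\sqrt5\,\alpha}}\Big)\right);$$ and $$\sum_{k=1}^\infty\frac{L_{2k}}{4^{k+1}(2k-1)k^2(2k+1)}=1-\frac{\pi^2}{24}-\frac12\ln^2\alpha-\frac{9\sqrt5}{8}\ln\alpha+\frac5{16}\ln5+\frac18\ln^25-\frac12\ln2\ln5+\ln^22+\frac14\operatorname{Li}_2\Big(\frac15\Big).$$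
   Context: $F_n=(\alpha^n-\beta^n)/(\alpha-\beta)$ and $L_n=\alpha^n+\beta^n$ are the Fibonacci and Lucas numbers. $\operatorname{arctanh}(x)=\frac12\ln\frac{1+x}{1-x}$ for $|x|<1$; $\operatorname{Li}_2(x)=\sum_{k\ge1}x^k/k^2$ is the dilogarithm. *)

theory Defs
  imports "HOL-Analysis.Analysis"
begin

definition gr_alpha :: real where "gr_alpha = (1 + sqrt 5) / 2"
definition gr_beta :: real where "gr_beta = (1 - sqrt 5) / 2"

definition Fib :: "nat \<Rightarrow> real" where
  "Fib n = (gr_alpha ^ n - gr_beta ^ n) / (gr_alpha - gr_beta)"

definition Luc :: "nat \<Rightarrow> real" where
  "Luc n = gr_alpha ^ n + gr_beta ^ n"

definition Li2 :: "real \<Rightarrow> real" where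
  "Li2 x = (\<Sum>k. x ^ (Suc k) / (real (Suc k))^2)"

end

theory Submission
  imports Defs "HOL-Real_Asymp.Real_Asymp"
begin


lemma sumM: "summable (\<lambda>k. 1 / (real (Suc k))^2)"
proof -
  have "(\<lambda>n. 1 / real ((n + 1)^2)) = (\<lambda>k. 1 / (real (Suc k))^2)" by (rule ext) simp
  then show ?thesis using sums_summable[OF inverse_squares_sums] by simp
qed

lemma boundM: "\<bar>x::real\<bar> \<le> 1 \<Longrightarrow> norm (x ^ Suc n / (real (Suc n))^2) \<le> 1 / (real (Suc n))^2"
proof -
  assume "\<bar>x\<bar> \<le> 1"
  then have h: "\<bar>x\<bar> ^ Suc n \<le> 1" by (intro power_le_one) auto
  have "norm (x ^ Suc n / (real (Suc n))^2) = \<bar>x\<bar> ^ Suc n / (real (Suc n))^2"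
    by (simp add: power_abs abs_mult)
  also have "\<dots> \<le> 1 / (real (Suc n))^2" by (rule divide_right_mono) (use h in auto)
  finally show ?thesis .
qed

lemma Li2_summable:
  assumes "\<bar>x\<bar> \<le> 1"
  shows "summable (\<lambda>k. x ^ (Suc k) / (real (Suc k))^2)"
  by (rule summable_comparison_test'[OF sumM boundM[OF assms]])

lemma Li2_sums: "\<bar>x\<bar> \<le> 1 \<Longrightarrow> (\<lambda>k. x ^ (Suc k) / (real (Suc k))^2) sums Li2 x"
  unfolding Li2_def using Li2_summable summable_sums by blast

lemma Li2_0 [simp]: "Li2 0 = 0"
  unfolding Li2_def by simp

lemma Li2_1: "Li2 1 = pi^2 / 6"
proof -
  have "(\<lambda>n. 1 / real ((n + 1)^2)) = (\<lambda>k. (1::real) ^ (Suc k) / (real (Suc k))^2)" by (rule ext) simp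
  then have "(\<lambda>k. (1::real) ^ (Suc k) / (real (Suc k))^2) sums (pi^2/6)"
    using inverse_squares_sums by simp
  then show ?thesis unfolding Li2_def by (rule sums_unique[symmetric])
qed

lemma Li2_cont: "continuous_on {-1..1} Li2"
proof -
  have ul: "uniform_limit {-1..1} (\<lambda>n x. \<Sum>i<n. x ^ (Suc i) / (real (Suc i))^2)
        (\<lambda>x. \<Sum>i. x ^ (Suc i) / (real (Suc i))^2) sequentially"
    by (rule Weierstrass_m_test[OF boundM sumM]) auto
  have "continuous_on {-1..1} (\<lambda>x. \<Sum>i. x ^ (Suc i) / (real (Suc i))^2)"
  proof (rule uniform_limit_theorem[OF _ ul])
    show "\<forall>\<^sub>F n in sequentially. continuous_on {-1..1} (\<lambda>x. \<Sum>i<n. x ^ (Suc i) / (real (Suc i))^2)"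
      by (intro always_eventually allI continuous_on_sum continuous_on_divide continuous_on_power continuous_on_id continuous_on_const) auto
  qed simp
  then show ?thesis unfolding Li2_def[abs_def] .
qed

definition Dl :: "real \<Rightarrow> real" where
  "Dl x = (\<Sum>n. (1 / real (Suc n)) * x ^ n)"

lemma Dl_0 [simp]: "Dl 0 = 1"
  unfolding Dl_def by (subst powser_zero) simp

lemma Dl_summable:
  assumes "\<bar>x\<bar> < 1"
  shows "summable (\<lambda>n. (1 / real (Suc n)) * x ^ n)"
proof (rule summable_comparison_test'[where g="\<lambda>n. \<bar>x\<bar> ^ n"])
  show "summable (\<lambda>n. \<bar>x\<bar> ^ n)" using assms by simp
  fix n :: nat
  have "norm ((1 / real (Suc n)) * x ^ n) = (1 / real (Suc n)) * \<bar>x\<bar> ^ n"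
    by (simp add: abs_mult power_abs)
  also have "\<dots> \<le> 1 * \<bar>x\<bar> ^ n" by (rule mult_right_mono) auto
  finally show "norm ((1 / real (Suc n)) * x ^ n) \<le> \<bar>x\<bar> ^ n" by simp
qed

lemma Li2_deriv:
  assumes "\<bar>x\<bar> < 1"
  shows "(Li2 has_real_derivative Dl x) (at x)"
proof -
  have "DERIV (\<lambda>x. (\<Sum>n. (1 / (real (Suc n))^2) * x^(Suc n))) x :>
          (\<Sum>n. (1 / (real (Suc n))^2) * real (Suc n) * x^n)"
  proof (rule DERIV_power_series'[where R=1])
    fix x :: real assume "x \<in> {-1<..<1}"
    then have "summable (\<lambda>n. (1 / real (Suc n)) * x ^ n)" by (intro Dl_summable) auto
    moreover have "(\<lambda>n. (1 / (real (Suc n))^2) * real (Suc n) * x^n) = (\<lambda>n. (1 / real (Suc n)) * x ^ n)"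
      by (rule ext) (simp add: power2_eq_square)
    ultimately show "summable (\<lambda>n. (1 / (real (Suc n))^2) * real (Suc n) * x^n)" by simp
  qed (use assms in auto)
  moreover have "(\<lambda>x. (\<Sum>n. (1 / (real (Suc n))^2) * x^(Suc n))) = Li2"
    unfolding Li2_def by (rule ext) simp
  moreover have "(\<Sum>n. (1 / (real (Suc n))^2) * real (Suc n) * x^n) = Dl x"
    unfolding Dl_def by (rule suminf_cong) (simp add: power2_eq_square)
  ultimately show ?thesis by simp
qed

lemma xDl:
  assumes "\<bar>x\<bar> < 1"
  shows "x * Dl x = - ln (1 - x)"
proof -
  have "(\<lambda>n. - ((-(-x))^n) / of_nat n) sums ln (1 + (-x))"
    using assms by (intro ln_series') simp
  then have "(\<lambda>n. - (x^n) / real n) sums ln (1 - x)" by simp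
  then have "(\<lambda>n. - (x^(Suc n)) / real (Suc n)) sums ln (1 - x)"
    by (subst sums_Suc_iff) simp
  then have "(\<lambda>n. x^(Suc n) / real (Suc n)) sums (- ln (1 - x))"
    using sums_minus by fastforce
  moreover have "(\<lambda>n. x * ((1 / real (Suc n)) * x ^ n)) sums (x * Dl x)"
    unfolding Dl_def by (intro sums_mult summable_sums Dl_summable assms)
  moreover have "(\<lambda>n. x * ((1 / real (Suc n)) * x ^ n)) = (\<lambda>n. x^(Suc n) / real (Suc n))"
    by (rule ext) simp
  ultimately have "(\<lambda>n. x^(Suc n) / real (Suc n)) sums (x * Dl x)" by simp
  with \<open>(\<lambda>n. x^(Suc n) / real (Suc n)) sums (- ln (1 - x))\<close> show ?thesis
    by (rule sums_unique2[symmetric])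
qed

lemma Dl_eq:
  assumes "\<bar>x\<bar> < 1" "x \<noteq> 0"
  shows "Dl x = - ln (1 - x) / x"
proof -
  have "Dl x = (x * Dl x) / x" using assms(2) by simp
  also have "\<dots> = - ln (1 - x) / x" using xDl[OF assms(1)] by simp
  finally show ?thesis .
qed

lemma Li2_DERIV_eq:
  assumes "(g has_real_derivative g') (at x within S)" "\<bar>g x\<bar> < 1" "E = Dl (g x) * g'"
  shows "((\<lambda>x. Li2 (g x)) has_real_derivative E) (at x within S)"
  using DERIV_chain'[OF assms(1) Li2_deriv[OF assms(2)]] assms(3) by simp


lemma deriv_const_interval:
  fixes f :: "real \<Rightarrow> real"
  assumes "a < b" "\<And>t. a \<le> t \<Longrightarrow> t \<le> b \<Longrightarrow> (f has_real_derivative f' t) (at t)"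
    "\<And>t. a < t \<Longrightarrow> t < b \<Longrightarrow> f' t = 0"
  shows "f b = f a"
proof -
  have "continuous_on {a..b} f"
    using assms(2) by (intro continuous_at_imp_continuous_on ballI DERIV_isCont) auto
  moreover have "\<And>t. a < t \<Longrightarrow> t < b \<Longrightarrow> DERIV f t :> 0"
    using assms(2,3) by (metis less_imp_le)
  ultimately show ?thesis using DERIV_isconst2[of a b f b] assms(1) by auto
qed

lemma alg1b: fixes t L :: real assumes "t \<noteq> 0" "t \<noteq> 1"
  shows "-L/t + (- (-L) / (t/(t-1))) * (-1/(t-1)^2) + L*(-1/(1-t)) = 0"
proof -
  have a: "t - 1 \<noteq> 0" "1 - t \<noteq> 0" using assms by auto
  have "(- (-L) / (t/(t-1))) * (-1/(t-1)^2) = - (L * (t-1)) / (t * (t-1)^2)"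
    using a assms by (simp add: divide_simps)
  also have "\<dots> = - L / (t * (t-1))" using a assms by (simp add: power2_eq_square)
  finally have e: "(- (-L) / (t/(t-1))) * (-1/(t-1)^2) = - L / (t*(t-1))" .
  show ?thesis unfolding e using a assms by (simp add: field_simps)
qed

lemma alg2: fixes t L M :: real assumes "t \<noteq> 0"
  shows "-L/t + (-M/(-t)) * (-1) - (-(L+M)/(t^2)) * (2*t)/2 = 0"
  using assms by (simp add: field_simps power2_eq_square)

lemma alg3: fixes t y A a b :: real assumes "t \<noteq> 0" "y \<noteq> 0" "1 - t \<noteq> 0" "1 - y \<noteq> 0"
  shows "(-(A-b)/(t/(1-y)))*(1/(1-y)) + (-(A-a)/(y/(1-t)))*(y/((1-t)*(1-t)))
     - (-(A-a-b)/(t*y/((1-t)*(1-y))))*(y/((1-t)*(1-t)*(1-y))) - (-a/t) - (-1/(1-t))*b = 0"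
proof -
  have e1: "(-(A-b)/(t/(1-y)))*(1/(1-y)) = -(A-b)/t" using assms by (simp add: divide_simps)
  have e2: "(-(A-a)/(y/(1-t)))*(y/((1-t)*(1-t))) = -(A-a)/(1-t)" using assms by (simp add: divide_simps)
  have e3: "(-(A-a-b)/(t*y/((1-t)*(1-y))))*(y/((1-t)*(1-t)*(1-y))) = -(A-a-b)/(t*(1-t))"
    using assms by (simp add: divide_simps)
  have "-(A-b)/t + -(A-a)/(1-t) - (-(A-a-b)/(t*(1-t))) - (-a/t) - (-1/(1-t))*b = 0"
    using assms by (simp add: divide_simps) (simp add: algebra_simps)
  then show ?thesis by (simp only: e1 e2 e3)
qed
lemma l3: fixes t y :: real assumes "1 - t \<noteq> 0" "1 - y \<noteq> 0"
  shows "1 - t*y/((1-t)*(1-y)) = (1-t-y)/((1-t)*(1-y))"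
proof -
  have D: "(1-t)*(1-y) \<noteq> 0" using assms by simp
  have "1 - t*y/((1-t)*(1-y)) = ((1-t)*(1-y) - t*y)/((1-t)*(1-y))" using D by (simp add: diff_divide_distrib)
  also have "(1-t)*(1-y) - t*y = 1-t-y" by (simp add: algebra_simps)
  finally show ?thesis .
qed

lemma Li2_landen:
  assumes "-1 < z" "z \<le> 0"
  shows "Li2 z + Li2 (z/(z-1)) = - ((ln (1 - z))^2 / 2)"
proof (cases "z = 0")
  case True then show ?thesis by simp
next
  case False
  then have z: "z < 0" using assms by simp
  define h where "h t = Li2 t + Li2 (t/(t-1)) + (ln(1-t))^2/2" for t
  define h' where "h' t = Dl t + Dl (t/(t-1)) * (-1/(t-1)^2) + ln(1-t) * (-1/(1-t))" for t
  have bnd: "\<bar>t/(t-1)\<bar> < 1" if "-1 < t" "t \<le> 0" for t::real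
  proof -
    have p: "1 - t > 0" using that by simp
    have "\<bar>t/(t-1)\<bar> = (-t)/(1-t)" using that by (simp add: abs_divide)
    also have "\<dots> < 1" by (subst pos_divide_less_eq[OF p]) simp
    finally show ?thesis .
  qed
  have "h 0 = h z"
  proof (rule deriv_const_interval[where f'=h' and f=h and a=z and b=0])
    show "z < 0" by fact
  next
    fix t assume t: "z \<le> t" "t \<le> 0"
    then have t1: "-1 < t" "t \<le> 0" using assms by auto
    then have at: "\<bar>t\<bar> < 1" by auto
    have d1: "(Li2 has_real_derivative Dl t) (at t)" by (rule Li2_deriv[OF at])
    have d2: "((\<lambda>t. t/(t-1)) has_real_derivative (-1/(t-1)^2)) (at t)"
      using t1 by (auto intro!: derivative_eq_intros simp: field_simps power2_eq_square)
    have d2': "((\<lambda>t. Li2 (t/(t-1))) has_real_derivative Dl (t/(t-1)) * (-1/(t-1)^2)) (at t)"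
      by (rule Li2_DERIV_eq[OF d2 bnd[OF t1] refl])
    have dl: "((\<lambda>t. ln(1-t)) has_real_derivative (-1/(1-t))) (at t)"
      using t1 by (auto intro!: derivative_eq_intros simp: field_simps)
    have dq: "((\<lambda>u::real. u^2/2) has_real_derivative (ln(1-t))) (at (ln(1-t)))"
      by (auto intro!: derivative_eq_intros)
    have d3: "((\<lambda>t. (ln(1-t))^2/2) has_real_derivative (ln(1-t) * (-1/(1-t)))) (at t)"
      using DERIV_chain'[OF dl dq] by (simp add: mult.commute)
    show "(h has_real_derivative h' t) (at t)"
      unfolding h_def[abs_def] h'_def by (intro DERIV_add d1 d2' d3)
  next
    fix t assume t: "z < t" "t < 0"
    then have t1: "-1 < t" "t \<le> 0" "t \<noteq> 0" "t - 1 \<noteq> 0" "1 - t > 0" using assms by auto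
    have w0: "t/(t-1) \<noteq> 0" using t1 by simp
    have e1: "Dl t = - ln(1-t) / t" by (rule Dl_eq) (use t1 in auto)
    have e2: "Dl (t/(t-1)) = - ln(1 - t/(t-1)) / (t/(t-1))" by (rule Dl_eq[OF bnd[OF t1(1,2)] w0])
    have "1 - t/(t-1) = inverse (1-t)" using t1 by (simp add: field_simps)
    then have e3: "ln (1 - t/(t-1)) = - ln (1-t)" using t1 by (simp add: ln_inverse)
    show "h' t = 0" unfolding h'_def e1 e2 e3 by (rule alg1b) (use t1 in auto)
  qed
  then show ?thesis unfolding h_def by simp
qed

lemma Li2_dup:
  assumes "0 \<le> x" "x < 1"
  shows "Li2 x + Li2 (-x) = Li2 (x^2) / 2"
proof (cases "x = 0")
  case True then show ?thesis by simp
next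
  case False
  then have x: "0 < x" using assms by simp
  define h where "h t = Li2 t + Li2 (-t) - Li2 (t^2)/2" for t
  define h' where "h' t = Dl t + Dl (-t) * (-1) - Dl (t^2) * (2*t) / 2" for t
  have "h x = h 0"
  proof (rule deriv_const_interval[where f'=h' and f=h and a=0 and b=x])
    show "0 < x" by fact
  next
    fix t assume t: "0 \<le> t" "t \<le> x"
    then have at: "\<bar>t\<bar> < 1" "\<bar>-t\<bar> < 1" "\<bar>t^2\<bar> < 1" using assms
      by (auto simp: abs_square_less_1)
    have d1: "(Li2 has_real_derivative Dl t) (at t)" by (rule Li2_deriv[OF at(1)])
    have d2: "((\<lambda>t. Li2 (-t)) has_real_derivative Dl (-t) * (-1)) (at t)"
      by (rule Li2_DERIV_eq[where g="\<lambda>t. -t", OF _ at(2) refl]) (auto intro!: derivative_eq_intros)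
    have d3: "((\<lambda>t. Li2 (t^2)) has_real_derivative Dl (t^2) * (2*t)) (at t)"
      by (rule Li2_DERIV_eq[where g="\<lambda>t. t^2", OF _ at(3) refl]) (auto intro!: derivative_eq_intros)
    show "(h has_real_derivative h' t) (at t)"
      unfolding h_def[abs_def] h'_def by (intro DERIV_add DERIV_diff DERIV_cdivide d1 d2 d3)
  next
    fix t assume t: "0 < t" "t < x"
    then have t1: "\<bar>t\<bar> < 1" "\<bar>-t\<bar> < 1" "\<bar>t^2\<bar> < 1" "t \<noteq> 0" "1 - t > 0" "1 + t > 0" using assms
      by (auto simp: abs_square_less_1)
    have e1: "Dl t = - ln(1-t) / t" by (rule Dl_eq) (use t1 in auto)
    have e2: "Dl (-t) = - ln(1+t) / (-t)" using Dl_eq[of "-t"] t1 by auto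
    have e3: "Dl (t^2) = - ln(1-t^2) / (t^2)" using Dl_eq[of "t^2"] t1 by auto
    have "1 - t^2 = (1-t)*(1+t)" by (simp add: algebra_simps power2_eq_square)
    then have e4: "ln (1 - t^2) = ln (1-t) + ln (1+t)" using t1 by (simp add: ln_mult)
    show "h' t = 0" unfolding h'_def e1 e2 e3 e4 by (rule alg2) (use t1 in auto)
  qed
  then show ?thesis unfolding h_def by simp
qed

lemma Li2_abel:
  assumes y: "\<bar>y\<bar> < 1" and x0: "0 < x0" "x0 < 1" "x0 + y < 1"
    and b1: "\<bar>y/(1-x0)\<bar> < 1" and b2: "\<bar>x0*y/((1-x0)*(1-y))\<bar> < 1"
  shows "Li2 (x0/(1-y)) + Li2 (y/(1-x0)) - Li2 (x0*y/((1-x0)*(1-y))) = Li2 x0 + Li2 y + ln(1-x0) * ln(1-y)"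
proof (cases "y = 0")
  case True then show ?thesis by simp
next
  case False
  have y1: "1 - y > 0" using y by auto
  define h where "h t = Li2 (t/(1-y)) + Li2 (y/(1-t)) - Li2 (t*y/((1-t)*(1-y))) - Li2 t - ln(1-t) * ln(1-y)" for t
  define h' where "h' t = Dl (t/(1-y)) * (1/(1-y)) + Dl (y/(1-t)) * (y/((1-t)*(1-t)))
     - Dl (t*y/((1-t)*(1-y))) * (y/((1-t)*(1-t)*(1-y))) - Dl t - (-1/(1-t))*ln(1-y)" for t
  have bnds: "\<bar>t\<bar> < 1 \<and> \<bar>t/(1-y)\<bar> < 1 \<and> \<bar>y/(1-t)\<bar> < 1 \<and> \<bar>t*y/((1-t)*(1-y))\<bar> < 1"
    if t: "0 \<le> t" "t \<le> x0" for t
  proof (intro conjI)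
    show "\<bar>t\<bar> < 1" using t x0 by auto
    have t1: "1 - t > 0" "1 - t \<ge> 1 - x0" "1 - x0 > 0" using t x0 by auto
    have "\<bar>t/(1-y)\<bar> = t/(1-y)" using t y1 by simp
    also have "\<dots> \<le> x0/(1-y)" using t y1 by (simp add: divide_right_mono)
    also have "\<dots> < 1" using x0 y1 by (simp add: pos_divide_less_eq)
    finally show "\<bar>t/(1-y)\<bar> < 1" .
    have "\<bar>y/(1-t)\<bar> = \<bar>y\<bar>/(1-t)" using t1 by (simp add: abs_divide)
    also have "\<dots> \<le> \<bar>y\<bar>/(1-x0)" using t1 by (intro divide_left_mono) auto
    also have "\<dots> = \<bar>y/(1-x0)\<bar>" using t1 by (simp add: abs_divide)
    finally show "\<bar>y/(1-t)\<bar> < 1" using b1 by linarith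
    have "t/(1-t) \<le> x0/(1-x0)" using t t1 by (simp add: divide_simps) (simp add: algebra_simps)
    have "\<bar>t*y/((1-t)*(1-y))\<bar> = (t/(1-t)) * (\<bar>y\<bar>/(1-y))" using t t1 y1 by (simp add: abs_divide abs_mult)
    also have "\<dots> \<le> (x0/(1-x0)) * (\<bar>y\<bar>/(1-y))"
      using \<open>t/(1-t) \<le> x0/(1-x0)\<close> y1 by (intro mult_right_mono) auto
    also have "\<dots> = \<bar>x0*y/((1-x0)*(1-y))\<bar>" using t1 y1 x0 by (simp add: abs_divide abs_mult)
    finally show "\<bar>t*y/((1-t)*(1-y))\<bar> < 1" using b2 by linarith
  qed
  have "h x0 = h 0"
  proof (rule deriv_const_interval[where f'=h' and f=h and a=0 and b=x0])
    show "0 < x0" by fact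
  next
    fix t assume t: "0 \<le> t" "t \<le> x0"
    note bt = bnds[OF t]
    have t1: "1 - t \<noteq> 0" using t x0 by auto
    have dp: "((\<lambda>t. t/(1-y)) has_real_derivative (1/(1-y))) (at t)"
      using y1 by (auto intro!: derivative_eq_intros)
    have dq: "((\<lambda>t. y/(1-t)) has_real_derivative (y/((1-t)*(1-t)))) (at t)"
      using t1 by (auto intro!: derivative_eq_intros simp: divide_simps)
    have ds: "((\<lambda>t. t*y/((1-t)*(1-y))) has_real_derivative (y/((1-t)*(1-t)*(1-y)))) (at t)"
      using t1 y1 by (auto intro!: derivative_eq_intros simp: divide_simps) (simp add: algebra_simps)
    have dl: "((\<lambda>t. ln(1-t) * ln(1-y)) has_real_derivative ((-1/(1-t))*ln(1-y))) (at t)"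
      using t t1 x0 by (auto intro!: derivative_eq_intros simp: divide_simps)
    show "(h has_real_derivative h' t) (at t)"
      unfolding h_def[abs_def] h'_def
      by (intro DERIV_add DERIV_diff Li2_DERIV_eq[OF dp] Li2_DERIV_eq[OF dq] Li2_DERIV_eq[OF ds] Li2_deriv dl)
         (use bt in auto)
  next
    fix t assume t: "0 < t" "t < x0"
    note bt = bnds[of t]
    have t1: "t \<noteq> 0" "1 - t \<noteq> 0" "1 - t > 0" "1 - t - y > 0" using t x0 by auto
    have nz: "t/(1-y) \<noteq> 0" "y/(1-t) \<noteq> 0" "t*y/((1-t)*(1-y)) \<noteq> 0"
      using t1 y1 False by auto
    have bt': "\<bar>t\<bar> < 1" "\<bar>t/(1-y)\<bar> < 1" "\<bar>y/(1-t)\<bar> < 1" "\<bar>t*y/((1-t)*(1-y))\<bar> < 1"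
      using bnds[of t] t by auto
    have l1: "1 - t/(1-y) = (1-t-y)/(1-y)" using y1 by (simp add: field_simps)
    have l2: "1 - y/(1-t) = (1-t-y)/(1-t)" using t1 by (simp add: field_simps)
    have l3: "1 - t*y/((1-t)*(1-y)) = (1-t-y)/((1-t)*(1-y))" using t1 y1 by (intro l3) auto
    have e1: "Dl (t/(1-y)) = -(ln(1-t-y) - ln(1-y))/(t/(1-y))"
      using Dl_eq[OF bt'(2) nz(1)] l1 t1 y1 by (simp add: ln_div)
    have e2: "Dl (y/(1-t)) = -(ln(1-t-y) - ln(1-t))/(y/(1-t))"
      using Dl_eq[OF bt'(3) nz(2)] l2 t1 by (simp add: ln_div)
    have e3: "Dl (t*y/((1-t)*(1-y))) = -(ln(1-t-y) - ln(1-t) - ln(1-y))/(t*y/((1-t)*(1-y)))"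
      using Dl_eq[OF bt'(4) nz(3)] l3 t1 y1 by (simp add: ln_div ln_mult)
    have e4: "Dl t = - ln(1-t)/t" using Dl_eq[OF bt'(1) t1(1)] .
    show "h' t = 0" unfolding h'_def e1 e2 e3 e4
      by (rule alg3) (use t1 y1 False in auto)
  qed
  then show ?thesis unfolding h_def by simp
qed

lemma Li2_refl:
  assumes "0 < x" "x < 1"
  shows "Li2 x + Li2 (1-x) = pi^2/6 - ln x * ln (1-x)"
proof -
  define h where "h t = Li2 t + Li2 (1-t) + ln t * ln (1-t)" for t
  define h' where "h' t = Dl t + Dl (1-t) * (-1) + ((1/t) * ln (1-t) + (-1/(1-t)) * ln t)" for t
  have der: "(h has_real_derivative h' t) (at t)" if t: "0 < t" "t < 1" for t
  proof -
    have a1: "\<bar>t\<bar> < 1" "\<bar>1-t\<bar> < 1" using t by auto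
    have d1: "((\<lambda>t. 1 - t) has_real_derivative (-1)) (at t)" by (auto intro!: derivative_eq_intros)
    have dln: "(ln has_real_derivative (1/t)) (at t)" using t by (auto intro!: derivative_eq_intros)
    have dln2: "((\<lambda>t. ln (1-t)) has_real_derivative (-1/(1-t))) (at t)"
      using t by (auto intro!: derivative_eq_intros simp: divide_simps)
    show ?thesis unfolding h_def[abs_def] h'_def
      by (intro DERIV_add Li2_deriv[OF a1(1)] Li2_DERIV_eq[OF d1 a1(2) refl] DERIV_mult[OF dln dln2])
  qed
  have zero: "h' t = 0" if t: "0 < t" "t < 1" for t
  proof -
    have e1: "Dl t = - ln (1-t) / t" using Dl_eq[of t] t by auto
    have e2: "Dl (1-t) = - ln t / (1-t)" using Dl_eq[of "1-t"] t by auto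
    show ?thesis unfolding h'_def e1 e2 using t by (simp add: field_simps)
  qed
  have const: "h t = h x" if "0 < t" "t < 1" for t
    using DERIV_isconst3[of 0 1 t x h] der zero that assms by auto
  have lim: "(h \<longlongrightarrow> pi^2/6) (at_right 0)"
  proof -
    have "(Li2 \<longlongrightarrow> Li2 0) (at 0)"
      using DERIV_isCont[OF Li2_deriv[of 0]] by (simp add: isCont_def)
    then have c1: "(Li2 \<longlongrightarrow> Li2 0) (at_right 0)" by (simp add: filterlim_at_split)
    have c2: "((\<lambda>t. Li2 (1-t)) \<longlongrightarrow> Li2 1) (at_right 0)"
    proof (rule continuous_on_tendsto_compose[OF Li2_cont])
      show "((\<lambda>t::real. 1 - t) \<longlongrightarrow> 1) (at_right 0)" by real_asymp
      show "(1::real) \<in> {-1..1}" by simp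
      show "\<forall>\<^sub>F t in at_right 0. 1 - t \<in> {-1..(1::real)}"
        using eventually_at_right_real[of 0 "1::real"] by (auto elim!: eventually_mono)
    qed
    have c3: "((\<lambda>t::real. ln t * ln (1-t)) \<longlongrightarrow> 0) (at_right 0)" by real_asymp
    have "((\<lambda>t. Li2 t + Li2 (1-t) + ln t * ln (1-t)) \<longlongrightarrow> Li2 0 + Li2 1 + 0) (at_right 0)"
      by (intro tendsto_add c1 c2 c3)
    then show ?thesis unfolding h_def[abs_def] by (simp add: Li2_1)
  qed
  have "((\<lambda>t::real. h x) \<longlongrightarrow> pi^2/6) (at_right 0)"
  proof (rule Lim_transform_eventually[OF lim])
    show "\<forall>\<^sub>F t in at_right 0. h t = h x"
      using eventually_at_right_real[of 0 "1::real"] const by (auto elim!: eventually_mono)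
  qed
  then have "h x = pi^2/6" using tendsto_const tendsto_unique trivial_limit_at_right_real by blast
  then show ?thesis unfolding h_def by simp
qed


definition wk :: "nat \<Rightarrow> real" where
  "wk k = 1 / ((2 * real k - 1) * (2 * real k)^2 * (2 * real k + 1))"

lemma wid:
  fixes x :: real assumes "0 \<le> x"
  shows "1/((2*(x+1) - 1)*(2*(x+1))^2*(2*(x+1)+1)) = 1/(2*x+1)/2 - 1/(2*(x+1)+1)/2 - 1/((x+1)^2)/4"
proof -
  have p: "2*x+1 \<noteq> 0" "x + 1 \<noteq> 0" "2*x+3 \<noteq> 0" using assms by auto
  have q: "2*(x+1)+1 = 2*x+3" "2*(x+1) - 1 = 2*x+1" "(2*(x+1))^2 = 4*((x+1)*(x+1))" "(x+1)^2 = (x+1)*(x+1)"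
    by (simp_all add: algebra_simps power2_eq_square)
  have "1/(2*x+1)/2 - 1/(2*x+3)/2 = 1/((2*x+1)*(2*x+3))"
    using p by (simp add: divide_simps) (simp add: algebra_simps)
  moreover have "1/((2*x+1)*(2*x+3)) - 1/((x+1)*(x+1))/4 = 1/((2*x+1)*(4*((x+1)*(x+1)))*(2*x+3))"
    using p by (simp add: divide_simps) (simp add: algebra_simps)
  ultimately show ?thesis unfolding q by simp
qed

lemma wk_Suc: "wk (Suc n) = 1/(2*real n+1)/2 - 1/(2*real (Suc n)+1)/2 - 1/((real (Suc n))^2)/4"
  using wid[of "real n"] unfolding wk_def by (simp add: add.commute)

lemma gsum:
  assumes y: "\<bar>y\<bar> < 1" and S: "(\<lambda>j. y^j / (2 * real j + 1)) sums S"
  shows "(\<lambda>n. y^(Suc n) * wk (Suc n)) sums (1/2 + (y - 1)/2 * S - Li2 y / 4)"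
proof -
  have s1: "(\<lambda>n. y * (y^n / (2 * real n + 1))) sums (y * S)" by (rule sums_mult[OF S])
  have s1': "(\<lambda>n. y^(Suc n) * (1/(2 * real n + 1))) sums (y * S)"
    using s1 by (simp add: mult.assoc)
  have "(\<lambda>j. y^j / (2 * real j + 1)) sums ((S - 1) + y^0 / (2 * real 0 + 1))" using S by simp
  then have s2: "(\<lambda>n. y^(Suc n) / (2 * real (Suc n) + 1)) sums (S - 1)"
    by (subst sums_Suc_iff)
  have s2': "(\<lambda>n. y^(Suc n) * (1 / (2 * real (Suc n) + 1))) sums (S - 1)"
    using s2 by simp
  have s3: "(\<lambda>n. y ^ (Suc n) * (1 / (real (Suc n))^2)) sums Li2 y" using Li2_sums[of y] y by simp
  have "(\<lambda>n. y^(Suc n) * (1/(2 * real n + 1)) / 2 - y^(Suc n) * (1 / (2 * real (Suc n) + 1)) / 2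
          - y ^ (Suc n) * (1 / (real (Suc n))^2) / 4) sums (y * S / 2 - (S - 1) / 2 - Li2 y / 4)"
    by (intro sums_diff sums_divide s1' s2' s3)
  moreover have "(\<lambda>n. y^(Suc n) * (1/(2 * real n + 1)) / 2 - y^(Suc n) * (1 / (2 * real (Suc n) + 1)) / 2
          - y ^ (Suc n) * (1 / (real (Suc n))^2) / 4) = (\<lambda>n. y^(Suc n) * wk (Suc n))"
  proof (rule ext)
    fix n
    show "y^(Suc n) * (1/(2 * real n + 1)) / 2 - y^(Suc n) * (1 / (2 * real (Suc n) + 1)) / 2
          - y ^ (Suc n) * (1 / (real (Suc n))^2) / 4 = y^(Suc n) * wk (Suc n)"
      unfolding wk_Suc by (simp only: right_diff_distrib times_divide_eq_right)
  qed
  moreover have "y * S / 2 - (S - 1) / 2 - Li2 y / 4 = 1/2 + (y - 1)/2 * S - Li2 y / 4"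
    by (simp add: field_simps)
  ultimately show ?thesis by simp
qed

lemma Aser_pos:
  assumes "0 < y" "y < 1"
  shows "(\<lambda>j. y^j / (2 * real j + 1)) sums (artanh (sqrt y) / sqrt y)"
proof -
  define x where "x = sqrt y"
  have x: "0 < x" "x < 1" "x^2 = y" using assms by (auto simp: x_def real_sqrt_lt_1_iff)
  define z where "z = (1+x)/(1-x)"
  have z: "z > 0" using x by (simp add: z_def)
  have zx: "(z-1)/(z+1) = x" using x unfolding z_def by (simp add: field_simps)
  have "(\<lambda>n. 2*((z-1)/(z+1))^(2*n+1) / of_nat (2*n+1)) sums ln z" by (rule ln_series_quadratic[OF z])
  then have "(\<lambda>n. 2*x^(2*n+1) / (2 * real n + 1)) sums (2 * artanh x)"
    unfolding zx by (simp add: artanh_def z_def add.commute)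
  then have "(\<lambda>n. (2*x^(2*n+1) / (2 * real n + 1)) / (2*x)) sums (2 * artanh x / (2*x))"
    by (rule sums_divide)
  moreover have "(\<lambda>n. (2*x^(2*n+1) / (2 * real n + 1)) / (2*x)) = (\<lambda>j. y^j / (2 * real j + 1))"
  proof (rule ext)
    fix n
    have "x^(2*n+1) = x * y^n" using x by (simp add: power_mult)
    then show "(2*x^(2*n+1) / (2 * real n + 1)) / (2*x) = y^n / (2 * real n + 1)"
      using x by simp
  qed
  ultimately show ?thesis unfolding x_def by simp
qed

lemma Aser_neg:
  assumes "-1 < y" "y < 0"
  shows "(\<lambda>j. y^j / (2 * real j + 1)) sums (arctan (sqrt (-y)) / sqrt (-y))"
proof -
  define t where "t = sqrt (-y)"
  have t: "0 < t" "t < 1" "t^2 = -y" using assms by (auto simp: t_def real_sqrt_lt_1_iff)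
  have "(\<lambda>k. (-1)^k * (1 / real (k*2+1) * t ^ (k*2+1))) sums arctan t"
    using summable_arctan_series[of t] arctan_series[of t] t by (simp add: sums_iff)
  then have "(\<lambda>k. (-1)^k * (1 / real (k*2+1) * t ^ (k*2+1)) / t) sums (arctan t / t)"
    by (rule sums_divide)
  moreover have "(\<lambda>k. (-1)^k * (1 / real (k*2+1) * t ^ (k*2+1)) / t) = (\<lambda>j. y^j / (2 * real j + 1))"
  proof (rule ext)
    fix n
    have "t ^ (n*2+1) = t * (t^2)^n" by (simp add: power_mult[symmetric] mult.commute)
    also have "\<dots> = t * (-y)^n" using t by simp
    finally have tt: "t ^ (n*2+1) = t * (-y)^n" .
    have "(-1::real)^n * (-y)^n = ((-1) * (-y))^n" by (rule power_mult_distrib[symmetric])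
    then have "(-1::real)^n * (-y)^n = y^n" by simp
    then have tt2: "(-1)^n * t ^ (n*2+1) = t * y^n" unfolding tt by (metis mult.left_commute)
    have "(-1)^n * (1 / real (n*2+1) * t ^ (n*2+1)) / t = ((-1)^n * t ^ (n*2+1)) / t / real (n*2+1)"
      by (simp only: divide_inverse mult_ac mult_1_left)
    also have "\<dots> = y^n / real (n*2+1)" unfolding tt2 using t by simp
    also have "\<dots> = y^n / (2 * real n + 1)" by (simp add: add.commute mult.commute)
    finally show "(-1)^n * (1 / real (n*2+1) * t ^ (n*2+1)) / t = y^n / (2 * real n + 1)" .
  qed
  ultimately show ?thesis unfolding t_def by simp
qed


abbreviation "ga \<equiv> gr_alpha"

lemma s5_gt2: "2 < sqrt (5::real)"
  by (rule real_less_rsqrt) simp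

lemma s5_lt3: "sqrt (5::real) < 3"
  by (rule real_less_lsqrt) simp_all

lemma s5_eq: "sqrt 5 = 2 * ga - 1" unfolding gr_alpha_def by (simp add: field_simps)

lemma ga_sq: "ga^2 = ga + 1"
proof -
  have "(sqrt 5)^2 = (5::real)" by simp
  then show ?thesis unfolding gr_alpha_def by (simp add: power2_eq_square algebra_simps)
qed

lemma ga_bnd: "3/2 < ga" "ga < 2"
  using s5_gt2 s5_lt3 unfolding gr_alpha_def by auto

lemma ga_pos: "0 < ga" using ga_bnd by simp

lemma gb_eq: "gr_beta = 1 - ga" unfolding gr_alpha_def gr_beta_def by (simp add: field_simps)

lemma ga_inv: "inverse ga = ga - 1"
proof -
  have "ga * (ga - 1) = 1" using ga_sq by (simp add: power2_eq_square algebra_simps)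
  then show ?thesis using ga_pos by (simp add: field_simps)
qed

lemma ga_inv2: "inverse (ga^2) = 2 - ga"
proof -
  have "ga^2 * (2 - ga) = 1" using ga_sq by algebra
  then show ?thesis using ga_pos by (simp add: field_simps)
qed

lemma ln_gam1: "ln (ga - 1) = - ln ga" using ga_inv by (metis ln_inverse)

lemma ln_2mga: "ln (2 - ga) = - 2 * ln ga"
  using ga_inv2 ln_inverse[of "ga^2"] ln_realpow[of ga 2] by simp

lemma Li2_golden: "Li2 (ga - 1) = pi^2/10 - (ln ga)^2 \<and> Li2 (2 - ga) = pi^2/15 - (ln ga)^2"
proof -
  have "Li2 (ga-1) + Li2 (1-(ga-1)) = pi^2/6 - ln (ga-1) * ln (1-(ga-1))"
    by (rule Li2_refl) (use ga_bnd in auto)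
  then have R: "Li2 (ga-1) + Li2 (2-ga) = pi^2/6 - 2 * (ln ga)^2"
    by (simp add: ln_gam1 ln_2mga power2_eq_square)
  have "Li2 (1-ga) + Li2 ((1-ga)/((1-ga)-1)) = - ((ln (1-(1-ga)))^2/2)"
    by (rule Li2_landen) (use ga_bnd in auto)
  moreover have "(1-ga)/((1-ga)-1) = 2 - ga"
  proof -
    have "ga \<noteq> 0" using ga_pos by simp
    then show ?thesis using ga_sq by (simp add: field_simps) algebra
  qed
  ultimately have L: "Li2 (1-ga) + Li2 (2-ga) = - ((ln ga)^2/2)" by simp
  have "Li2 (ga-1) + Li2 (-(ga-1)) = Li2 ((ga-1)^2) / 2"
    by (rule Li2_dup) (use ga_bnd in auto)
  moreover have "(ga-1)^2 = 2 - ga" using ga_sq by algebra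
  ultimately have D: "Li2 (ga-1) + Li2 (1-ga) = Li2 (2-ga) / 2" by simp
  from R L D show ?thesis by linarith
qed

lemma Li2_half: "Li2 (1/2) = pi^2/12 - (ln 2)^2/2"
proof -
  have "Li2 (1/2) + Li2 (1-1/2) = pi^2/6 - ln (1/2) * ln (1-1/2)"
    by (rule Li2_refl) auto
  then show ?thesis by (simp add: ln_div power2_eq_square)
qed

lemma case1_Li2: "Li2 (ga/2) + Li2 (gr_beta/2) = pi^2/12 - (ln 2)^2 + 2*(ln ga)^2"
proof -
  have gn: "ga \<noteq> 0" "ga - 1 \<noteq> 0" "ga + 1 \<noteq> 0" using ga_bnd by auto
  have A: "Li2 ((1/2)/(1-(2-ga))) + Li2 ((2-ga)/(1-1/2)) - Li2 ((1/2)*(2-ga)/((1-1/2)*(1-(2-ga))))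
      = Li2 (1/2) + Li2 (2-ga) + ln (1-1/2) * ln (1-(2-ga))"
    by (rule Li2_abel) (use ga_bnd in \<open>auto simp: abs_less_iff field_simps\<close>)
  have a1: "(1/2)/(1-(2-ga)) = ga/2" using gn ga_sq by (simp add: field_simps) algebra
  have a2: "(2-ga)/(1-1/2) = 4 - 2*ga" by simp
  have a3: "(1/2)*(2-ga)/((1-1/2)*(1-(2-ga))) = ga - 1" using gn ga_sq by (simp add: field_simps) algebra
  have A': "Li2 (ga/2) + Li2 (4 - 2*ga) - Li2 (ga - 1) = Li2 (1/2) + Li2 (2-ga) + ln 2 * ln ga"
    using A unfolding a1 a2 a3 by (simp add: ln_div ln_gam1)
  have "Li2 (4 - 2*ga) + Li2 (1 - (4 - 2*ga)) = pi^2/6 - ln (4 - 2*ga) * ln (1 - (4 - 2*ga))"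
    by (rule Li2_refl) (use ga_bnd in auto)
  moreover have "1 - (4 - 2*ga) = inverse (ga^3)"
  proof -
    have "ga^3 * (2*ga - 3) = 1" using ga_sq by algebra
    then show ?thesis using gn by (simp add: field_simps)
  qed
  moreover have "ln (4 - 2*ga) = ln 2 - 2 * ln ga"
  proof -
    have "ln (4 - 2*ga) = ln (2 * (2 - ga))" by (rule arg_cong[where f=ln]) simp
    also have "\<dots> = ln 2 + ln (2 - ga)" by (rule ln_mult_pos) (use ga_bnd in auto)
    finally show ?thesis by (simp add: ln_2mga)
  qed
  ultimately have B: "Li2 (4 - 2*ga) + Li2 (inverse (ga^3)) = pi^2/6 + (ln 2 - 2 * ln ga) * (3 * ln ga)"
    by (simp add: ln_inverse ln_realpow)
  have "Li2 ((1-ga)/2) + Li2 (((1-ga)/2)/((1-ga)/2-1)) = - ((ln (1-(1-ga)/2))^2/2)"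
    by (rule Li2_landen) (use ga_bnd in auto)
  moreover have "((1-ga)/2)/((1-ga)/2-1) = inverse (ga^3)"
  proof -
    have "ga^3 * (ga - 1) = ga + 1" using ga_sq by algebra
    then show ?thesis using gn by (simp add: field_simps)
  qed
  moreover have "ln (1-(1-ga)/2) = 2 * ln ga - ln 2"
  proof -
    have "ln (1-(1-ga)/2) = ln (ga^2 / 2)" by (rule arg_cong[where f=ln]) (use ga_sq in \<open>simp add: field_simps\<close>)
    also have "\<dots> = 2 * ln ga - ln 2" using ga_pos by (simp add: ln_div ln_realpow)
    finally show ?thesis .
  qed
  ultimately have C: "Li2 ((1-ga)/2) + Li2 (inverse (ga^3)) = - ((2 * ln ga - ln 2)^2/2)" by simp
  have gb2: "gr_beta/2 = (1-ga)/2" by (simp add: gb_eq)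
  have G1: "Li2 (ga - 1) = pi^2/10 - (ln ga)^2" and G2: "Li2 (2 - ga) = pi^2/15 - (ln ga)^2"
    using Li2_golden by auto
  show ?thesis unfolding gb2 using A' B C G1 G2 Li2_half by algebra
qed


lemma ga_nz: "ga \<noteq> 0" using ga_pos by simp

lemma ln4: "ln (4::real) = 2 * ln 2"
  using ln_realpow[of "2::real" 2] by simp

lemma ln_s5: "ln (sqrt 5) = ln 5 / 2" by (simp add: ln_sqrt)

lemma s5_pos: "0 < sqrt (5::real)" by simp

lemma case2_Li2: "Li2 (ga^3/5) + Li2 (gr_beta^3/5) = pi^2/12 - 2*(ln 2)^2 + 6*(ln ga)^2 + 2 * (ln 2 * ln 5) - (ln 5)^2 - Li2 (- 1 / 4)"
proof -
  have g3: "ga^3 = 2*ga + 1" using ga_sq by algebra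
  have b3: "gr_beta^3 = 3 - 2*ga" unfolding gb_eq using ga_sq by algebra
  have gn: "ga + 1 \<noteq> 0" "2 - ga \<noteq> 0" using ga_bnd by auto
  have a1: "(ga^3/5)/(1-gr_beta^3/5) = ga/2" unfolding g3 b3 using gn ga_sq by (simp add: field_simps) algebra
  have a2: "(gr_beta^3/5)/(1-ga^3/5) = gr_beta/2" unfolding g3 b3 gb_eq using gn ga_sq by (simp add: field_simps) algebra
  have n3: "(ga^3/5)*(gr_beta^3/5) = - 1 / 25" unfolding g3 b3 using ga_sq by (simp add: field_simps) algebra
  have d3: "(1-ga^3/5)*(1-gr_beta^3/5) = 4 / 25" unfolding g3 b3 using ga_sq by (simp add: field_simps) algebra
  have a3: "(ga^3/5)*(gr_beta^3/5)/((1-ga^3/5)*(1-gr_beta^3/5)) = - 1 / 4"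
    unfolding n3 d3 by simp
  have c1: "\<bar>gr_beta^3/5\<bar> < 1" "0 < ga^3/5" "ga^3/5 < 1" "ga^3/5 + gr_beta^3/5 < 1"
    unfolding g3 b3 using ga_bnd by (auto simp: field_simps)
  have c2: "\<bar>(gr_beta^3/5)/(1-ga^3/5)\<bar> < 1" unfolding a2 unfolding gb_eq using ga_bnd by auto
  have c3: "\<bar>(ga^3/5)*(gr_beta^3/5)/((1-ga^3/5)*(1-gr_beta^3/5))\<bar> < 1" unfolding a3 by simp
  have A: "Li2 ((ga^3/5)/(1-gr_beta^3/5)) + Li2 ((gr_beta^3/5)/(1-ga^3/5)) - Li2 ((ga^3/5)*(gr_beta^3/5)/((1-ga^3/5)*(1-gr_beta^3/5)))
     = Li2 (ga^3/5) + Li2 (gr_beta^3/5) + ln (1-ga^3/5) * ln (1-gr_beta^3/5)"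
    by (rule Li2_abel[OF c1 c2 c3])
  have l1: "ln (1-ga^3/5) = ln 2 - 2 * ln ga - ln 5"
  proof -
    have "1-ga^3/5 = 2 / (5 * ga^2)" using ga_nz by (simp add: field_simps) (use ga_sq in algebra)
    then have "ln (1-ga^3/5) = ln (2 / (5 * ga^2))" by simp
    also have "\<dots> = ln 2 - 2 * ln ga - ln 5" using ga_nz by (simp add: ln_div ln_mult ln_realpow)
    finally show ?thesis .
  qed
  have l2: "ln (1-gr_beta^3/5) = ln 2 + 2 * ln ga - ln 5"
  proof -
    have "ln (1-gr_beta^3/5) = ln (2 * ga^2 / 5)" by (rule arg_cong[where f=ln])
      (unfold b3, use ga_sq in \<open>simp add: field_simps\<close>)
    also have "\<dots> = ln 2 + 2 * ln ga - ln 5" using ga_nz by (simp add: ln_div ln_mult ln_realpow)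
    finally show ?thesis .
  qed
  have "Li2 (ga^3/5) + Li2 (gr_beta^3/5) = (pi^2/12 - (ln 2)^2 + 2*(ln ga)^2) - Li2 (- 1 / 4)
      - (ln 2 - 2 * ln ga - ln 5) * (ln 2 + 2 * ln ga - ln 5)"
    using A case1_Li2 unfolding a1 a2 a3 l1 l2 by linarith
  then show ?thesis by (simp add: field_simps power2_eq_square)
qed

lemma refl5: "Li2 (ga / sqrt 5) + Li2 (1 / (sqrt 5 * ga)) = pi^2/6 - (ln ga - ln 5 / 2) * (- ln 5 / 2 - ln ga)"
proof -
  have u: "0 < ga / sqrt 5" "ga / sqrt 5 < 1" using ga_bnd s5_eq by (auto simp: field_simps)
  have e: "1 - ga / sqrt 5 = 1 / (sqrt 5 * ga)"
    unfolding s5_eq using ga_nz ga_sq ga_bnd by (simp add: field_simps) algebra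
  have l1: "ln (ga / sqrt 5) = ln ga - ln 5 / 2" using ga_pos by (simp add: ln_div ln_s5)
  have l2: "ln (1 / (sqrt 5 * ga)) = - ln 5 / 2 - ln ga" using ga_pos by (simp add: ln_div ln_mult ln_s5)
  show ?thesis using Li2_refl[OF u] unfolding e l1 l2 .
qed

lemma case5_Li2: "Li2 (ga^2/4) + Li2 (gr_beta^2/4) = pi^2/6 - (ln 5)^2/2 + 2*(ln ga)^2 + 2 * (ln 2 * ln 5) - 4*(ln 2)^2 - Li2 (1/5)"
proof -
  have b2: "gr_beta^2 = 2 - ga" unfolding gb_eq using ga_sq by algebra
  have gn: "ga + 1 \<noteq> 0" "2 - ga \<noteq> 0" "3 - ga \<noteq> 0" "ga + 2 \<noteq> 0" "2*ga - 1 \<noteq> 0" using ga_bnd by auto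
  have a1: "(ga^2/4)/(1-gr_beta^2/4) = ga / sqrt 5" unfolding b2 s5_eq using gn ga_sq by (simp add: field_simps) algebra
  have a2: "(gr_beta^2/4)/(1-ga^2/4) = 1 / (sqrt 5 * ga)" unfolding b2 s5_eq using gn ga_nz ga_sq by (simp add: field_simps) algebra
  have a3: "(ga^2/4)*(gr_beta^2/4)/((1-ga^2/4)*(1-gr_beta^2/4)) = 1 / 5"
    unfolding b2 using gn ga_sq by (simp add: field_simps) algebra
  have c1: "\<bar>gr_beta^2/4\<bar> < 1" "0 < ga^2/4" "ga^2/4 < 1" "ga^2/4 + gr_beta^2/4 < 1"
    unfolding ga_sq b2 using ga_bnd by (auto simp: field_simps)
  have m: "2 * 1 < sqrt 5 * ga" by (rule mult_strict_mono) (use s5_gt2 ga_bnd in auto)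
  have mp: "0 < sqrt 5 * ga" using ga_pos by simp
  have c2: "\<bar>(gr_beta^2/4)/(1-ga^2/4)\<bar> < 1" unfolding a2 using m mp by (simp add: divide_less_eq)
  have c3: "\<bar>(ga^2/4)*(gr_beta^2/4)/((1-ga^2/4)*(1-gr_beta^2/4))\<bar> < 1" unfolding a3 by simp
  have A: "Li2 ((ga^2/4)/(1-gr_beta^2/4)) + Li2 ((gr_beta^2/4)/(1-ga^2/4)) - Li2 ((ga^2/4)*(gr_beta^2/4)/((1-ga^2/4)*(1-gr_beta^2/4)))
     = Li2 (ga^2/4) + Li2 (gr_beta^2/4) + ln (1-ga^2/4) * ln (1-gr_beta^2/4)"
    by (rule Li2_abel[OF c1 c2 c3])
  have l1: "ln (1-ga^2/4) = ln 5 / 2 - 2 * ln 2 - ln ga"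
  proof -
    have "ln (1-ga^2/4) = ln (sqrt 5 / (4 * ga))" by (rule arg_cong[where f=ln])
      (unfold s5_eq, use ga_nz ga_sq in \<open>simp add: field_simps, algebra\<close>)
    also have "\<dots> = ln 5 / 2 - 2 * ln 2 - ln ga" using ga_pos by (simp add: ln_div ln_mult ln_s5 ln4)
    finally show ?thesis .
  qed
  have l2: "ln (1-gr_beta^2/4) = ln 5 / 2 + ln ga - 2 * ln 2"
  proof -
    have "ln (1-gr_beta^2/4) = ln (sqrt 5 * ga / 4)" by (rule arg_cong[where f=ln])
      (unfold s5_eq b2, use ga_sq in \<open>simp add: field_simps, algebra\<close>)
    also have "\<dots> = ln 5 / 2 + ln ga - 2 * ln 2" using ga_pos by (simp add: ln_div ln_mult ln_s5 ln4)
    finally show ?thesis .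
  qed
  have "Li2 (ga^2/4) + Li2 (gr_beta^2/4) = pi^2/6 - (ln ga - ln 5 / 2) * (- ln 5 / 2 - ln ga) - Li2 (1/5)
     - (ln 5 / 2 - 2 * ln 2 - ln ga) * (ln 5 / 2 + ln ga - 2 * ln 2)"
    using A refl5 unfolding a1 a2 a3 l1 l2 by linarith
  then show ?thesis by (simp add: field_simps power2_eq_square)
qed


lemma pairsum:
  assumes "\<bar>u\<bar> < 1" "\<bar>v\<bar> < 1" "(\<lambda>j. u^j / (2 * real j + 1)) sums Su" "(\<lambda>j. v^j / (2 * real j + 1)) sums Sv"
  shows "(\<lambda>n. (u^(Suc n) + v^(Suc n)) * wk (Suc n)) sums
           ((1/2 + (u - 1)/2 * Su - Li2 u / 4) + (1/2 + (v - 1)/2 * Sv - Li2 v / 4))"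
  using sums_add[OF gsum[OF assms(1,3)] gsum[OF assms(2,4)]] by (simp add: distrib_right)

lemma sqrt_assoc: "0 \<le> c \<Longrightarrow> sqrt c * (sqrt c * x) = c * (x::real)"
  by (simp add: mult.assoc[symmetric])

lemma sqrt_ga: "0 < sqrt ga" "(sqrt ga)^2 = ga" using ga_pos by auto

lemma part1: "(\<lambda>n. let k = Suc n in Luc k / (2 ^ (k + 2) * (2 * real k - 1) * (real k)^2 * (2 * real k + 1)))
      sums (1 - pi^2 / 48 + (ln 2)^2 / 4 - (ln gr_alpha)^2 / 2
            - 1 / (2 * gr_alpha^2 * sqrt (2 * gr_alpha)) * artanh (sqrt (gr_alpha / 2))
            - gr_alpha^2 * sqrt gr_alpha / (2 * sqrt 2) * arctan (sqrt (1 / (2 * gr_alpha))))"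
proof -
  define u where "u = ga / 2"
  define v where "v = gr_beta / 2"
  have u: "0 < u" "u < 1" using ga_bnd by (auto simp: u_def)
  have v: "-1 < v" "v < 0" using ga_bnd by (auto simp: v_def gb_eq)
  have S: "(\<lambda>n. (u^(Suc n) + v^(Suc n)) * wk (Suc n)) sums
       ((1/2 + (u - 1)/2 * (artanh (sqrt u) / sqrt u) - Li2 u / 4) + (1/2 + (v - 1)/2 * (arctan (sqrt (-v)) / sqrt (-v)) - Li2 v / 4))"
    by (rule pairsum) (use u v Aser_pos[OF u] Aser_neg[OF v] in auto)
  have termeq: "(\<lambda>n. let k = Suc n in Luc k / (2 ^ (k + 2) * (2 * real k - 1) * (real k)^2 * (2 * real k + 1)))
      = (\<lambda>n. (u^(Suc n) + v^(Suc n)) * wk (Suc n))"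
  proof (rule ext)
    fix n
    define k where "k = Suc n"
    have d: "2 ^ (k + 2) * (2 * real k - 1) * (real k)^2 * (2 * real k + 1)
        = 2^k * ((2 * real k - 1) * (2 * real k)^2 * (2 * real k + 1))"
      by (simp add: power_add power2_eq_square algebra_simps)
    have uv: "u^k + v^k = Luc k / 2^k" unfolding u_def v_def Luc_def by (simp add: power_divide add_divide_distrib)
    have "Luc k / (2 ^ (k + 2) * (2 * real k - 1) * (real k)^2 * (2 * real k + 1)) = (u^k + v^k) * wk k"
      unfolding d uv wk_def by simp
    then show "(let k = Suc n in Luc k / (2 ^ (k + 2) * (2 * real k - 1) * (real k)^2 * (2 * real k + 1)))
      = (u^(Suc n) + v^(Suc n)) * wk (Suc n)" unfolding k_def Let_def .
  qed
  have sq1: "sqrt u = sqrt ga / sqrt 2" unfolding u_def by (simp add: real_sqrt_divide)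
  have sq2: "sqrt (2 * ga) = sqrt 2 * sqrt ga" by (simp add: real_sqrt_mult)
  have mv: "-v = 1 / (2 * ga)"
    unfolding v_def gb_eq using ga_nz ga_sq by (simp add: field_simps) (use ga_sq in algebra)
  have sq3: "sqrt (1 / (2 * ga)) = 1 / (sqrt 2 * sqrt ga)" by (simp add: real_sqrt_divide real_sqrt_mult)
  have sg: "0 < sqrt ga" "(sqrt ga)^2 = ga" by (rule sqrt_ga)+
  have s2: "0 < sqrt (2::real)" "(sqrt 2)^2 = (2::real)" by auto
  have nz: "sqrt ga \<noteq> 0" "sqrt (2::real) \<noteq> 0" "ga \<noteq> 0" using sg ga_nz by auto
  have K1: "(u - 1) / 2 / sqrt u = - (1 / (2 * ga^2 * sqrt (2 * ga)))"
    unfolding sq1 unfolding sq2 u_def by (simp add: field_simps nz sqrt_assoc) (use ga_sq in algebra)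
  have K2: "(v - 1) / 2 / sqrt (-v) = - (ga^2 * sqrt ga / (2 * sqrt 2))"
    unfolding mv sq3 using sg s2 ga_nz by (simp add: field_simps v_def gb_eq) (use ga_sq in algebra)
  have L: "Li2 u + Li2 v = pi^2/12 - (ln 2)^2 + 2*(ln ga)^2" unfolding u_def v_def by (rule case1_Li2)
  have V: "(1/2 + (u - 1)/2 * (artanh (sqrt u) / sqrt u) - Li2 u / 4) + (1/2 + (v - 1)/2 * (arctan (sqrt (-v)) / sqrt (-v)) - Li2 v / 4)
     = 1 - pi^2 / 48 + (ln 2)^2 / 4 - (ln gr_alpha)^2 / 2
            - 1 / (2 * gr_alpha^2 * sqrt (2 * gr_alpha)) * artanh (sqrt (gr_alpha / 2))
            - gr_alpha^2 * sqrt gr_alpha / (2 * sqrt 2) * arctan (sqrt (1 / (2 * gr_alpha)))"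
  proof -
    have e1: "(u - 1)/2 * (artanh (sqrt u) / sqrt u) = - (1 / (2 * ga^2 * sqrt (2 * ga)) * artanh (sqrt (ga / 2)))"
    proof -
      have "(u - 1)/2 * (artanh (sqrt u) / sqrt u) = ((u - 1) / 2 / sqrt u) * artanh (sqrt u)" by simp
      also have "\<dots> = - (1 / (2 * ga^2 * sqrt (2 * ga)) * artanh (sqrt (ga / 2)))" unfolding K1 by (simp add: u_def)
      finally show ?thesis .
    qed
    have e2: "(v - 1)/2 * (arctan (sqrt (-v)) / sqrt (-v)) = - (ga^2 * sqrt ga / (2 * sqrt 2) * arctan (sqrt (1 / (2 * ga))))"
    proof -
      have "(v - 1)/2 * (arctan (sqrt (-v)) / sqrt (-v)) = ((v - 1) / 2 / sqrt (-v)) * arctan (sqrt (-v))" by simp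
      also have "\<dots> = - (ga^2 * sqrt ga / (2 * sqrt 2) * arctan (sqrt (1 / (2 * ga))))" unfolding K2 unfolding mv by simp
      finally show ?thesis .
    qed
    show ?thesis unfolding e1 e2 using L by linarith
  qed
  show ?thesis unfolding termeq using S unfolding V .
qed


lemma ga_ge0: "0 \<le> ga" using ga_pos by simp

lemma part2: "(\<lambda>n. let k = Suc n in Luc (3 * k) / (5 ^ k * (2 * real k - 1) * (2 * real k)^2 * (2 * real k + 1)))
      sums (1 - pi^2 / 48 + (ln 2)^2 / 2 - 3 / 2 * (ln gr_alpha)^2 - ln 2 * ln 5 / 2
            + (ln 5)^2 / 4 + Li2 (- 1 / 4) / 4
            - 1 / (gr_alpha^3 * sqrt (5 * gr_alpha)) * artanh (gr_alpha * sqrt gr_alpha / sqrt 5)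
            - gr_alpha^3 * sqrt gr_alpha / sqrt 5 * arctan (1 / (gr_alpha * sqrt (5 * gr_alpha))))"
proof -
  define u where "u = ga^3 / 5"
  define v where "v = gr_beta^3 / 5"
  have g3: "ga^3 = 2*ga + 1" using ga_sq by algebra
  have b3: "gr_beta^3 = 3 - 2*ga" unfolding gb_eq using ga_sq by algebra
  have u: "0 < u" "u < 1" using ga_bnd by (auto simp: u_def g3)
  have v: "-1 < v" "v < 0" using ga_bnd by (auto simp: v_def b3)
  have S: "(\<lambda>n. (u^(Suc n) + v^(Suc n)) * wk (Suc n)) sums
       ((1/2 + (u - 1)/2 * (artanh (sqrt u) / sqrt u) - Li2 u / 4) + (1/2 + (v - 1)/2 * (arctan (sqrt (-v)) / sqrt (-v)) - Li2 v / 4))"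
    by (rule pairsum) (use u v Aser_pos[OF u] Aser_neg[OF v] in auto)
  have termeq: "(\<lambda>n. let k = Suc n in Luc (3 * k) / (5 ^ k * (2 * real k - 1) * (2 * real k)^2 * (2 * real k + 1)))
      = (\<lambda>n. (u^(Suc n) + v^(Suc n)) * wk (Suc n))"
  proof (rule ext)
    fix n
    define k where "k = Suc n"
    have uv: "u^k + v^k = Luc (3 * k) / 5^k" unfolding u_def v_def Luc_def
      by (simp add: power_divide add_divide_distrib power_mult)
    have "Luc (3 * k) / (5 ^ k * (2 * real k - 1) * (2 * real k)^2 * (2 * real k + 1)) = (u^k + v^k) * wk k"
      unfolding uv wk_def by simp
    then show "(let k = Suc n in Luc (3 * k) / (5 ^ k * (2 * real k - 1) * (2 * real k)^2 * (2 * real k + 1)))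
      = (u^(Suc n) + v^(Suc n)) * wk (Suc n)" unfolding k_def Let_def .
  qed
  have sg: "0 < sqrt ga" "(sqrt ga)^2 = ga" by (rule sqrt_ga)+
  have nz: "sqrt ga \<noteq> 0" "sqrt (5::real) \<noteq> 0" "ga \<noteq> 0" using sg ga_nz by auto
  have sq1: "sqrt u = ga * sqrt ga / sqrt 5"
  proof (rule real_sqrt_unique)
    show "(ga * sqrt ga / sqrt 5)^2 = u" unfolding u_def using ga_ge0 by (simp add: power_divide power_mult_distrib power3_eq_cube power2_eq_square)
    show "0 \<le> ga * sqrt ga / sqrt 5" using ga_ge0 by simp
  qed
  have sq2: "sqrt (5 * ga) = sqrt 5 * sqrt ga" by (simp add: real_sqrt_mult)
  have sq3: "sqrt (-v) = 1 / (ga * sqrt (5 * ga))"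
  proof (rule real_sqrt_unique)
    have "ga^3 * (2*ga - 3) = 1" using ga_sq by algebra
    then show "(1 / (ga * sqrt (5 * ga)))^2 = -v" unfolding v_def b3 using ga_ge0 nz
      by (simp add: power_divide power_mult_distrib field_simps) (use ga_sq in algebra)
    show "0 \<le> 1 / (ga * sqrt (5 * ga))" using ga_ge0 by simp
  qed
  have K1: "(u - 1) / 2 / sqrt u = - (1 / (ga^3 * sqrt (5 * ga)))"
    unfolding sq1 unfolding sq2 u_def by (simp add: field_simps nz sqrt_assoc ga_ge0) (use ga_sq in algebra)
  have K2: "(v - 1) / 2 / sqrt (-v) = - (ga^3 * sqrt ga / sqrt 5)"
    unfolding sq3 unfolding sq2 v_def b3 by (simp add: field_simps nz sqrt_assoc ga_ge0) (use ga_sq in algebra)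
  have L: "Li2 u + Li2 v = pi^2/12 - 2*(ln 2)^2 + 6*(ln ga)^2 + 2 * (ln 2 * ln 5) - (ln 5)^2 - Li2 (- 1 / 4)"
    unfolding u_def v_def by (rule case2_Li2)
  have V: "(1/2 + (u - 1)/2 * (artanh (sqrt u) / sqrt u) - Li2 u / 4) + (1/2 + (v - 1)/2 * (arctan (sqrt (-v)) / sqrt (-v)) - Li2 v / 4)
     = 1 - pi^2 / 48 + (ln 2)^2 / 2 - 3 / 2 * (ln gr_alpha)^2 - ln 2 * ln 5 / 2
            + (ln 5)^2 / 4 + Li2 (- 1 / 4) / 4
            - 1 / (gr_alpha^3 * sqrt (5 * gr_alpha)) * artanh (gr_alpha * sqrt gr_alpha / sqrt 5)
            - gr_alpha^3 * sqrt gr_alpha / sqrt 5 * arctan (1 / (gr_alpha * sqrt (5 * gr_alpha)))"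
  proof -
    have e1: "(u - 1)/2 * (artanh (sqrt u) / sqrt u) = - (1 / (ga^3 * sqrt (5 * ga)) * artanh (ga * sqrt ga / sqrt 5))"
    proof -
      have "(u - 1)/2 * (artanh (sqrt u) / sqrt u) = ((u - 1) / 2 / sqrt u) * artanh (sqrt u)" by simp
      also have "\<dots> = - (1 / (ga^3 * sqrt (5 * ga)) * artanh (ga * sqrt ga / sqrt 5))" unfolding K1 unfolding sq1 by simp
      finally show ?thesis .
    qed
    have e2: "(v - 1)/2 * (arctan (sqrt (-v)) / sqrt (-v)) = - (ga^3 * sqrt ga / sqrt 5 * arctan (1 / (ga * sqrt (5 * ga))))"
    proof -
      have "(v - 1)/2 * (arctan (sqrt (-v)) / sqrt (-v)) = ((v - 1) / 2 / sqrt (-v)) * arctan (sqrt (-v))" by simp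
      also have "\<dots> = - (ga^3 * sqrt ga / sqrt 5 * arctan (1 / (ga * sqrt (5 * ga))))" unfolding K2 unfolding sq3 by simp
      finally show ?thesis .
    qed
    show ?thesis unfolding e1 e2 using L by linarith
  qed
  show ?thesis unfolding termeq using S unfolding V .
qed


lemma part3: "\<forall>r::nat. even r \<longrightarrow>
      (\<lambda>n. let k = Suc n in Luc (r * k) / (Luc r ^ k * (2 * real k - 1) * (2 * real k)^2 * (2 * real k + 1)))
      sums (1 - pi^2 / 24 - (real r)^2 * (ln gr_alpha)^2 / 4 + (ln (Luc r))^2 / 4
            - sqrt (1 / (gr_alpha ^ (3 * r) * Luc r)) / 2 * artanh (sqrt (gr_alpha ^ r / Luc r))
            - sqrt (gr_alpha ^ (3 * r) / Luc r) / 2 * artanh (sqrt (1 / (gr_alpha ^ r * Luc r))))"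
proof (intro allI impI)
  fix r :: nat assume ev: "even r"
  define p where "p = ga^r"
  have p: "p > 0" unfolding p_def using ga_pos by simp
  have gbi: "gr_beta = - (1 / ga)" unfolding gb_eq using ga_inv by (simp add: divide_inverse)
  have bp: "gr_beta^r = 1/p" unfolding gbi p_def using ev by (simp add: power_one_over)
  define L where "L = Luc r"
  have Lp: "L = p + 1/p" unfolding L_def Luc_def bp p_def ..
  have Lpos: "L > 0" unfolding Lp using p by (intro add_pos_pos) auto
  define u where "u = p / L"
  define v where "v = 1 / (p * L)"
  have pL: "p * L = p^2 + 1" unfolding Lp using p by (simp add: field_simps power2_eq_square)
  have uv1: "u + v = 1"
  proof -
    have "u + v = (p*p+1)/(p*L)" unfolding u_def v_def using p Lpos by (simp add: field_simps)
    moreover have "p*L = p*p+1" using pL by (simp add: power2_eq_square)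
    moreover have "0 < p*p+1" using p by (simp add: add_pos_pos)
    ultimately show ?thesis by simp
  qed
  have u0: "0 < u" unfolding u_def using p Lpos by simp
  have v0: "0 < v" unfolding v_def using p Lpos by simp
  have u: "0 < u" "u < 1" using u0 v0 uv1 by auto
  have v: "0 < v" "v < 1" using u0 v0 uv1 by auto
  have S: "(\<lambda>n. (u^(Suc n) + v^(Suc n)) * wk (Suc n)) sums
       ((1/2 + (u - 1)/2 * (artanh (sqrt u) / sqrt u) - Li2 u / 4) + (1/2 + (v - 1)/2 * (artanh (sqrt v) / sqrt v) - Li2 v / 4))"
    by (rule pairsum) (use u v Aser_pos[OF u] Aser_pos[OF v] in auto)
  have termeq: "(\<lambda>n. let k = Suc n in Luc (r * k) / (Luc r ^ k * (2 * real k - 1) * (2 * real k)^2 * (2 * real k + 1)))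
      = (\<lambda>n. (u^(Suc n) + v^(Suc n)) * wk (Suc n))"
  proof (rule ext)
    fix n
    define k where "k = Suc n"
    have "Luc (r * k) = p^k + (1/p)^k" unfolding Luc_def p_def using bp[unfolded p_def]
      by (simp add: power_mult)
    then have uvk: "u^k + v^k = Luc (r * k) / L^k" unfolding u_def v_def
      by (simp add: power_divide add_divide_distrib power_one_over power_mult_distrib)
    have "Luc (r * k) / (Luc r ^ k * (2 * real k - 1) * (2 * real k)^2 * (2 * real k + 1)) = (u^k + v^k) * wk k"
      unfolding uvk wk_def L_def by simp
    then show "(let k = Suc n in Luc (r * k) / (Luc r ^ k * (2 * real k - 1) * (2 * real k)^2 * (2 * real k + 1)))
      = (u^(Suc n) + v^(Suc n)) * wk (Suc n)" unfolding k_def Let_def .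
  qed
  have g3r: "ga ^ (3 * r) = p^3" unfolding p_def by (simp add: power_mult[symmetric] mult.commute)
  have K1: "(u - 1) / 2 / sqrt u = - (sqrt (1 / (ga ^ (3 * r) * L)) / 2)"
  proof -
    have "v^2 / u = 1 / (p^3 * L)" unfolding u_def v_def using p Lpos by (simp add: field_simps power2_eq_square power3_eq_cube)
    then have "sqrt (1 / (ga ^ (3 * r) * L)) = v / sqrt u" unfolding g3r using v
      by (metis abs_of_pos real_sqrt_abs real_sqrt_divide)
    moreover have "u - 1 = - v" using uv1 by simp
    ultimately show ?thesis by simp
  qed
  have K2: "(v - 1) / 2 / sqrt v = - (sqrt (ga ^ (3 * r) / L) / 2)"
  proof -
    have "u^2 / v = p^3 / L" unfolding u_def v_def using p Lpos by (simp add: field_simps power2_eq_square power3_eq_cube)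
    then have "sqrt (ga ^ (3 * r) / L) = u / sqrt v" unfolding g3r using u
      by (metis abs_of_pos real_sqrt_abs real_sqrt_divide)
    moreover have "v - 1 = - u" using uv1 by simp
    ultimately show ?thesis by simp
  qed
  have lu: "ln u = real r * ln ga - ln L" unfolding u_def p_def using ga_pos Lpos by (simp add: ln_div ln_realpow)
  have lv: "ln v = - (real r * ln ga) - ln L" unfolding v_def p_def using ga_pos Lpos by (simp add: ln_div ln_mult ln_realpow)
  have "Li2 u + Li2 v = pi^2/6 - ln u * ln v"
  proof -
    have "1 - u = v" using uv1 by simp
    then show ?thesis using Li2_refl[OF u] by simp
  qed
  then have "Li2 u + Li2 v = pi^2/6 - (real r * ln ga - ln L) * (- (real r * ln ga) - ln L)" unfolding lu lv .
  then have LL: "Li2 u + Li2 v = pi^2/6 + (real r)^2 * (ln ga)^2 - (ln L)^2"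
    by (simp add: algebra_simps power2_eq_square)
  have V: "(1/2 + (u - 1)/2 * (artanh (sqrt u) / sqrt u) - Li2 u / 4) + (1/2 + (v - 1)/2 * (artanh (sqrt v) / sqrt v) - Li2 v / 4)
     = 1 - pi^2 / 24 - (real r)^2 * (ln gr_alpha)^2 / 4 + (ln (Luc r))^2 / 4
            - sqrt (1 / (gr_alpha ^ (3 * r) * Luc r)) / 2 * artanh (sqrt (gr_alpha ^ r / Luc r))
            - sqrt (gr_alpha ^ (3 * r) / Luc r) / 2 * artanh (sqrt (1 / (gr_alpha ^ r * Luc r)))"
  proof -
    have e1: "(u - 1)/2 * (artanh (sqrt u) / sqrt u) = - (sqrt (1 / (gr_alpha ^ (3 * r) * Luc r)) / 2 * artanh (sqrt (gr_alpha ^ r / Luc r)))"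
    proof -
      have "(u - 1)/2 * (artanh (sqrt u) / sqrt u) = ((u - 1) / 2 / sqrt u) * artanh (sqrt u)" by simp
      also have "\<dots> = - (sqrt (1 / (gr_alpha ^ (3 * r) * Luc r)) / 2 * artanh (sqrt (gr_alpha ^ r / Luc r)))"
        unfolding K1 unfolding u_def p_def L_def by simp
      finally show ?thesis .
    qed
    have e2: "(v - 1)/2 * (artanh (sqrt v) / sqrt v) = - (sqrt (gr_alpha ^ (3 * r) / Luc r) / 2 * artanh (sqrt (1 / (gr_alpha ^ r * Luc r))))"
    proof -
      have "(v - 1)/2 * (artanh (sqrt v) / sqrt v) = ((v - 1) / 2 / sqrt v) * artanh (sqrt v)" by simp
      also have "\<dots> = - (sqrt (gr_alpha ^ (3 * r) / Luc r) / 2 * artanh (sqrt (1 / (gr_alpha ^ r * Luc r))))"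
        unfolding K2 unfolding v_def p_def L_def by simp
      finally show ?thesis .
    qed
    show ?thesis unfolding e1 e2 using LL unfolding L_def by linarith
  qed
  show "(\<lambda>n. let k = Suc n in Luc (r * k) / (Luc r ^ k * (2 * real k - 1) * (2 * real k)^2 * (2 * real k + 1)))
      sums (1 - pi^2 / 24 - (real r)^2 * (ln gr_alpha)^2 / 4 + (ln (Luc r))^2 / 4
            - sqrt (1 / (gr_alpha ^ (3 * r) * Luc r)) / 2 * artanh (sqrt (gr_alpha ^ r / Luc r))
            - sqrt (gr_alpha ^ (3 * r) / Luc r) / 2 * artanh (sqrt (1 / (gr_alpha ^ r * Luc r))))"
    unfolding termeq using S unfolding V .
qed


lemma part5: "(\<lambda>n. let k = Suc n in Luc (2 * k) / (4 ^ (k + 1) * (2 * real k - 1) * (real k)^2 * (2 * real k + 1)))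
      sums (1 - pi^2 / 24 - (ln gr_alpha)^2 / 2 - 9 * sqrt 5 / 8 * ln gr_alpha + 5 / 16 * ln 5
            + (ln 5)^2 / 8 - ln 2 * ln 5 / 2 + (ln 2)^2 + Li2 (1 / 5) / 4)"
proof -
  define u where "u = ga^2 / 4"
  define v where "v = gr_beta^2 / 4"
  have b2: "gr_beta^2 = 2 - ga" unfolding gb_eq using ga_sq by algebra
  have u: "0 < u" "u < 1" using ga_bnd by (auto simp: u_def ga_sq)
  have v: "0 < v" "v < 1" using ga_bnd by (auto simp: v_def b2)
  have S: "(\<lambda>n. (u^(Suc n) + v^(Suc n)) * wk (Suc n)) sums
       ((1/2 + (u - 1)/2 * (artanh (sqrt u) / sqrt u) - Li2 u / 4) + (1/2 + (v - 1)/2 * (artanh (sqrt v) / sqrt v) - Li2 v / 4))"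
    by (rule pairsum) (use u v Aser_pos[OF u] Aser_pos[OF v] in auto)
  have termeq: "(\<lambda>n. let k = Suc n in Luc (2 * k) / (4 ^ (k + 1) * (2 * real k - 1) * (real k)^2 * (2 * real k + 1)))
      = (\<lambda>n. (u^(Suc n) + v^(Suc n)) * wk (Suc n))"
  proof (rule ext)
    fix n
    define k where "k = Suc n"
    have d: "4 ^ (k + 1) * (2 * real k - 1) * (real k)^2 * (2 * real k + 1)
        = 4^k * ((2 * real k - 1) * (2 * real k)^2 * (2 * real k + 1))"
      by (simp add: power_add power2_eq_square algebra_simps)
    have uv: "u^k + v^k = Luc (2 * k) / 4^k" unfolding u_def v_def Luc_def
      by (simp add: power_divide add_divide_distrib power_mult)
    have "Luc (2 * k) / (4 ^ (k + 1) * (2 * real k - 1) * (real k)^2 * (2 * real k + 1)) = (u^k + v^k) * wk k"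
      unfolding d uv wk_def by simp
    then show "(let k = Suc n in Luc (2 * k) / (4 ^ (k + 1) * (2 * real k - 1) * (real k)^2 * (2 * real k + 1)))
      = (u^(Suc n) + v^(Suc n)) * wk (Suc n)" unfolding k_def Let_def .
  qed
  have gn: "ga \<noteq> 0" "ga - 1 \<noteq> 0" "2 - ga \<noteq> 0" "3 - ga \<noteq> 0" "2*ga - 1 \<noteq> 0" using ga_bnd by auto
  have squ: "sqrt u = ga / 2"
    by (rule real_sqrt_unique) (use ga_pos in \<open>auto simp: u_def power_divide\<close>)
  have sqv: "sqrt v = (ga - 1) / 2"
  proof (rule real_sqrt_unique)
    show "((ga - 1) / 2)^2 = v" unfolding v_def b2 by (simp add: power_divide) (use ga_sq in algebra)
    show "0 \<le> (ga - 1) / 2" using ga_bnd by simp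
  qed
  have au: "artanh (ga / 2) = (ln 5 / 2 + 3 * ln ga) / 2"
  proof -
    have "(1 + ga/2) / (1 - ga/2) = sqrt 5 * ga^3"
      unfolding s5_eq using gn by (simp add: field_simps) (use ga_sq in algebra)
    then have "artanh (ga / 2) = ln (sqrt 5 * ga^3) / 2" by (simp add: artanh_def)
    also have "\<dots> = (ln 5 / 2 + 3 * ln ga) / 2" using ga_pos by (simp add: ln_mult ln_s5 ln_realpow)
    finally show ?thesis .
  qed
  have av: "artanh ((ga - 1) / 2) = (3 * ln ga - ln 5 / 2) / 2"
  proof -
    have "(1 + (ga - 1)/2) / (1 - (ga - 1)/2) = ga^3 / sqrt 5"
      unfolding s5_eq using gn by (simp add: field_simps) (use ga_sq in algebra)
    then have "artanh ((ga - 1) / 2) = ln (ga^3 / sqrt 5) / 2" by (simp add: artanh_def)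
    also have "\<dots> = (3 * ln ga - ln 5 / 2) / 2" using ga_pos by (simp add: ln_div ln_s5 ln_realpow)
    finally show ?thesis .
  qed
  define cu where "cu = (u - 1) / 2 / (ga / 2)"
  define cv where "cv = (v - 1) / 2 / ((ga - 1) / 2)"
  have cpl: "cu + cv = - 3 * sqrt 5 / 4"
    unfolding cu_def cv_def u_def v_def b2 s5_eq using gn by (simp add: field_simps) (use ga_sq in algebra)
  have cmi: "cu - cv = 5 / 4"
    unfolding cu_def cv_def u_def v_def b2 using gn by (simp add: field_simps) (use ga_sq in algebra)
  have E: "(u - 1)/2 * (artanh (sqrt u) / sqrt u) + (v - 1)/2 * (artanh (sqrt v) / sqrt v)
      = - 9 * sqrt 5 / 8 * ln ga + 5 / 16 * ln 5"
  proof -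
    have "(u - 1)/2 * (artanh (sqrt u) / sqrt u) + (v - 1)/2 * (artanh (sqrt v) / sqrt v)
        = cu * ((ln 5 / 2 + 3 * ln ga) / 2) + cv * ((3 * ln ga - ln 5 / 2) / 2)"
    proof -
      have t1: "(u - 1)/2 * (artanh (sqrt u) / sqrt u) = ((u - 1)/2/sqrt u) * artanh (sqrt u)" by simp
      have t2: "(v - 1)/2 * (artanh (sqrt v) / sqrt v) = ((v - 1)/2/sqrt v) * artanh (sqrt v)" by simp
      show ?thesis unfolding t1 t2 unfolding squ sqv au av cu_def cv_def ..
    qed
    also have "\<dots> = 3 * ln ga / 2 * (cu + cv) + ln 5 / 4 * (cu - cv)" by (simp add: field_simps)
    also have "\<dots> = - 9 * sqrt 5 / 8 * ln ga + 5 / 16 * ln 5" unfolding cpl cmi by (simp add: field_simps)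
    finally show ?thesis .
  qed
  have L: "Li2 u + Li2 v = pi^2/6 - (ln 5)^2/2 + 2*(ln ga)^2 + 2 * (ln 2 * ln 5) - 4*(ln 2)^2 - Li2 (1/5)"
    unfolding u_def v_def by (rule case5_Li2)
  have V: "(1/2 + (u - 1)/2 * (artanh (sqrt u) / sqrt u) - Li2 u / 4) + (1/2 + (v - 1)/2 * (artanh (sqrt v) / sqrt v) - Li2 v / 4)
     = 1 - pi^2 / 24 - (ln gr_alpha)^2 / 2 - 9 * sqrt 5 / 8 * ln gr_alpha + 5 / 16 * ln 5
            + (ln 5)^2 / 8 - ln 2 * ln 5 / 2 + (ln 2)^2 + Li2 (1 / 5) / 4"
    using E L by linarith
  show ?thesis unfolding termeq using S unfolding V .
qed


lemma K1gen:
  fixes q g s :: real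
  assumes "q \<noteq> 0" "g \<noteq> 0" "s \<noteq> 0"
  shows "- (1 / (q^2 * g)) / 2 / (s / q) = - (1 / (2 * q)) * (1 / (g * s))"
  using assms by (simp add: field_simps power2_eq_square)

lemma K2gen:
  fixes q g s :: real
  assumes "q \<noteq> 0" "g \<noteq> 0" "s \<noteq> 0"
  shows "- (g / q^2) / 2 / (1 / (q * s)) = - (1 / (2 * q)) * (g * s)"
  using assms by (simp add: field_simps power2_eq_square)

lemma part4: "summable (\<lambda>n. let k = Suc n in Luc (2 * k) / (5 ^ k * (4 * real k - 1) * (4 * real k)^2 * (4 * real k + 1)))
    \<and> summable (\<lambda>n. let k = Suc n in Fib (2 * k - 1) / (5 ^ (k - 1) * (4 * real k - 3) * (4 * real k - 2)^2 * (4 * real k - 1)))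
    \<and> (\<Sum>n. let k = Suc n in Luc (2 * k) / (5 ^ k * (4 * real k - 1) * (4 * real k)^2 * (4 * real k + 1)))
      + (\<Sum>n. let k = Suc n in Fib (2 * k - 1) / (5 ^ (k - 1) * (4 * real k - 3) * (4 * real k - 2)^2 * (4 * real k - 1)))
      = 1 - pi^2 / 24 + (ln 5)^2 / 16 - (ln gr_alpha)^2 / 4
        - 1 / (2 * sqrt (sqrt 5)) * (1 / (gr_alpha * sqrt gr_alpha) * artanh (sqrt (gr_alpha / sqrt 5))
                                    + gr_alpha * sqrt gr_alpha * artanh (sqrt (1 / (sqrt 5 * gr_alpha))))"
proof -
  define u where "u = ga / sqrt 5"
  define v where "v = 1 / (sqrt 5 * ga)"
  have s5p: "0 < sqrt (5::real)" by simp
  have uv1: "u + v = 1"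
    unfolding u_def v_def s5_eq using ga_nz ga_bnd by (simp add: field_simps) (use ga_sq in algebra)
  have u0: "0 < u" unfolding u_def using ga_pos by simp
  have v0: "0 < v" unfolding v_def using ga_pos by simp
  have u: "0 < u" "u < 1" using u0 v0 uv1 by auto
  have v: "0 < v" "v < 1" using u0 v0 uv1 by auto
  define V where "V = (1/2 + (u - 1)/2 * (artanh (sqrt u) / sqrt u) - Li2 u / 4) + (1/2 + (v - 1)/2 * (artanh (sqrt v) / sqrt v) - Li2 v / 4)"
  define f where "f n = (u^(Suc n) + v^(Suc n)) * wk (Suc n)" for n
  have S: "f sums V" unfolding f_def V_def
    by (rule pairsum) (use u v Aser_pos[OF u] Aser_pos[OF v] in auto)
  have wpos: "wk (Suc n) > 0" for n
  proof -
    have "2 * real (Suc n) - 1 > 0" by simp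
    then show ?thesis unfolding wk_def by (intro divide_pos_pos mult_pos_pos) auto
  qed
  have fnn: "f n \<ge> 0" for n unfolding f_def using u0 v0 wpos[of n] by simp
  have gb_inv: "gr_beta = - (1 / ga)" unfolding gb_eq using ga_inv by (simp add: divide_inverse)
  have s5sq: "sqrt 5 ^ 2 = (5::real)" by simp
  have TL: "(let k = Suc n in Luc (2 * k) / (5 ^ k * (4 * real k - 1) * (4 * real k)^2 * (4 * real k + 1))) = f (2*n+1)" for n
  proof -
    define k where "k = Suc n"
    have k2: "Suc (2*n+1) = 2 * k" unfolding k_def by simp
    have uv: "u^(2*k) + v^(2*k) = Luc (2 * k) / 5^k"
    proof -
      have "u^(2*k) = (ga^2)^k / 5^k" unfolding u_def by (simp add: power_mult power_divide)
      moreover have "v^(2*k) = (gr_beta^2)^k / 5^k" unfolding v_def gb_inv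
        by (simp add: power_mult power_divide power_mult_distrib)
      ultimately show ?thesis unfolding Luc_def by (simp add: power_mult add_divide_distrib)
    qed
    have w: "wk (2 * k) = 1 / ((4 * real k - 1) * (4 * real k)^2 * (4 * real k + 1))"
      unfolding wk_def by simp
    show ?thesis unfolding f_def k2 uv w k_def[symmetric] Let_def by simp
  qed
  have TF: "(let k = Suc n in Fib (2 * k - 1) / (5 ^ (k - 1) * (4 * real k - 3) * (4 * real k - 2)^2 * (4 * real k - 1))) = f (2*n)" for n
  proof -
    have k1: "2 * Suc n - 1 = 2*n+1" "Suc n - 1 = n" by simp_all
    have uv: "u^(2*n+1) + v^(2*n+1) = Fib (2*n+1) / 5^n"
    proof -
      have sp: "sqrt 5 ^ (2*n+1) = sqrt 5 * 5^n" by (simp add: power_mult)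
      have e1: "u^(2*n+1) = ga^(2*n+1) / (sqrt 5 * 5^n)" unfolding u_def sp[symmetric] by (simp add: power_divide)
      have e2: "v^(2*n+1) = (1/ga)^(2*n+1) / (sqrt 5 * 5^n)" unfolding v_def sp[symmetric]
        by (simp add: power_divide power_mult_distrib power_one_over)
      have e3: "gr_beta^(2*n+1) = - ((1/ga)^(2*n+1))" unfolding gb_inv by simp
      have e4: "gr_alpha - gr_beta = sqrt 5" unfolding gr_alpha_def gr_beta_def by (simp add: field_simps)
      have "Fib (2*n+1) = (ga^(2*n+1) + (1/ga)^(2*n+1)) / sqrt 5" unfolding Fib_def e3 e4 by simp
      then have "Fib (2*n+1) / 5^n = (ga^(2*n+1) + (1/ga)^(2*n+1)) / (sqrt 5 * 5^n)" by simp
      moreover have "u^(2*n+1) + v^(2*n+1) = (ga^(2*n+1) + (1/ga)^(2*n+1)) / (sqrt 5 * 5^n)"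
        unfolding e1 e2 by (simp add: add_divide_distrib)
      ultimately show ?thesis by simp
    qed
    have w: "wk (Suc (2*n)) = 1 / ((4 * real (Suc n) - 3) * (4 * real (Suc n) - 2)^2 * (4 * real (Suc n) - 1))"
    proof -
      have a: "2 * real (Suc (2*n)) - 1 = 4 * real (Suc n) - 3" by simp
      have b: "2 * real (Suc (2*n)) = 4 * real (Suc n) - 2" by simp
      have c: "2 * real (Suc (2*n)) + 1 = 4 * real (Suc n) - 1" by simp
      show ?thesis unfolding wk_def b by (simp add: algebra_simps)
    qed
    have fs: "f (2*n) = (u^(2*n+1) + v^(2*n+1)) * wk (Suc (2*n))" unfolding f_def by simp
    show ?thesis unfolding fs uv w Let_def k1 by simp
  qed
  have G: "(\<lambda>n. f (2*n) + f (2*n+1)) sums V"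
  proof -
    have "(\<lambda>n. sum f {n * 2 ..< n * 2 + 2}) sums V" by (rule sums_group[OF S]) simp
    moreover have "sum f {n * 2 ..< n * 2 + 2} = f (2*n) + f (2*n+1)" for n
    proof -
      have "{n * 2 ..< n * 2 + 2} = {2*n, 2*n+1}" by auto
      then show ?thesis by simp
    qed
    ultimately show ?thesis by simp
  qed
  have sG: "summable (\<lambda>n. f (2*n) + f (2*n+1))" using G sums_summable by blast
  have sE: "summable (\<lambda>n. f (2*n))"
    by (rule summable_comparison_test'[OF sG]) (use fnn in auto)
  have sO: "summable (\<lambda>n. f (2*n+1))"
    by (rule summable_comparison_test'[OF sG]) (use fnn in auto)
  have sumeq: "(\<Sum>n. f (2*n+1)) + (\<Sum>n. f (2*n)) = V"
  proof -
    have "(\<Sum>n. f (2*n+1)) + (\<Sum>n. f (2*n)) = (\<Sum>n. f (2*n+1) + f (2*n))"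
      by (rule suminf_add[OF sO sE])
    also have "\<dots> = (\<Sum>n. f (2*n) + f (2*n+1))" by (simp add: add.commute)
    also have "\<dots> = V" using sums_unique[OF G] by simp
    finally show ?thesis .
  qed
  define q where "q = sqrt (sqrt (5::real))"
  have q: "q \<noteq> 0" "q^2 = sqrt 5" unfolding q_def by auto
  have sg: "0 < sqrt ga" by (rule sqrt_ga)
  have squ: "sqrt u = sqrt ga / q" unfolding u_def q_def by (simp add: real_sqrt_divide)
  have sqv: "sqrt v = 1 / (q * sqrt ga)" unfolding v_def q_def by (simp add: real_sqrt_divide real_sqrt_mult)
  have K1: "(u - 1) / 2 / sqrt u = - (1 / (2 * q)) * (1 / (ga * sqrt ga))"
  proof -
    have "u - 1 = - (1 / (q^2 * ga))" using uv1 unfolding v_def q(2) by simp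
    then show ?thesis unfolding squ using K1gen[of q ga "sqrt ga"] q(1) ga_nz sg by simp
  qed
  have K2: "(v - 1) / 2 / sqrt v = - (1 / (2 * q)) * (ga * sqrt ga)"
  proof -
    have "v - 1 = - (ga / q^2)" using uv1 unfolding u_def q(2) by simp
    then show ?thesis unfolding sqv using K2gen[of q ga "sqrt ga"] q(1) ga_nz sg by simp
  qed
  have LL: "Li2 u + Li2 v = pi^2/6 + (ln ga)^2 - (ln 5)^2/4"
  proof -
    have "Li2 u + Li2 v = pi^2/6 - (ln ga - ln 5 / 2) * (- ln 5 / 2 - ln ga)" unfolding u_def v_def by (rule refl5)
    then show ?thesis by (simp add: algebra_simps power2_eq_square)
  qed
  have Vv: "V = 1 - pi^2 / 24 + (ln 5)^2 / 16 - (ln gr_alpha)^2 / 4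
        - 1 / (2 * sqrt (sqrt 5)) * (1 / (gr_alpha * sqrt gr_alpha) * artanh (sqrt (gr_alpha / sqrt 5))
                                    + gr_alpha * sqrt gr_alpha * artanh (sqrt (1 / (sqrt 5 * gr_alpha))))"
  proof -
    have e1: "(u - 1)/2 * (artanh (sqrt u) / sqrt u) = - (1 / (2 * q) * (1 / (ga * sqrt ga) * artanh (sqrt (ga / sqrt 5))))"
    proof -
      have "(u - 1)/2 * (artanh (sqrt u) / sqrt u) = ((u - 1) / 2 / sqrt u) * artanh (sqrt u)" by simp
      also have "\<dots> = - (1 / (2 * q) * (1 / (ga * sqrt ga) * artanh (sqrt (ga / sqrt 5))))"
        unfolding K1 unfolding u_def by simp
      finally show ?thesis .
    qed
    have e2: "(v - 1)/2 * (artanh (sqrt v) / sqrt v) = - (1 / (2 * q) * (ga * sqrt ga * artanh (sqrt (1 / (sqrt 5 * ga)))))"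
    proof -
      have "(v - 1)/2 * (artanh (sqrt v) / sqrt v) = ((v - 1) / 2 / sqrt v) * artanh (sqrt v)" by simp
      also have "\<dots> = - (1 / (2 * q) * (ga * sqrt ga * artanh (sqrt (1 / (sqrt 5 * ga)))))"
        unfolding K2 unfolding v_def by simp
      finally show ?thesis .
    qed
    have dl: "1 / (2 * q) * (1 / (ga * sqrt ga) * artanh (sqrt (ga / sqrt 5)) + ga * sqrt ga * artanh (sqrt (1 / (sqrt 5 * ga))))
       = 1 / (2 * q) * (1 / (ga * sqrt ga) * artanh (sqrt (ga / sqrt 5))) + 1 / (2 * q) * (ga * sqrt ga * artanh (sqrt (1 / (sqrt 5 * ga))))"
      by (rule distrib_left)
    show ?thesis unfolding V_def e1 e2 q_def[symmetric] dl using LL by linarith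
  qed
  show ?thesis
    unfolding TL TF using sO sE sumeq Vv by simp
qed


theorem theorem15:
  shows
   "((\<lambda>n. let k = Suc n in Luc k / (2 ^ (k + 2) * (2 * real k - 1) * (real k)^2 * (2 * real k + 1)))
      sums (1 - pi^2 / 48 + (ln 2)^2 / 4 - (ln gr_alpha)^2 / 2
            - 1 / (2 * gr_alpha^2 * sqrt (2 * gr_alpha)) * artanh (sqrt (gr_alpha / 2))
            - gr_alpha^2 * sqrt gr_alpha / (2 * sqrt 2) * arctan (sqrt (1 / (2 * gr_alpha)))))
   \<and> ((\<lambda>n. let k = Suc n in Luc (3 * k) / (5 ^ k * (2 * real k - 1) * (2 * real k)^2 * (2 * real k + 1)))
      sums (1 - pi^2 / 48 + (ln 2)^2 / 2 - 3 / 2 * (ln gr_alpha)^2 - ln 2 * ln 5 / 2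
            + (ln 5)^2 / 4 + Li2 (- 1 / 4) / 4
            - 1 / (gr_alpha^3 * sqrt (5 * gr_alpha)) * artanh (gr_alpha * sqrt gr_alpha / sqrt 5)
            - gr_alpha^3 * sqrt gr_alpha / sqrt 5 * arctan (1 / (gr_alpha * sqrt (5 * gr_alpha)))))
   \<and> (\<forall>r::nat. even r \<longrightarrow>
      (\<lambda>n. let k = Suc n in Luc (r * k) / (Luc r ^ k * (2 * real k - 1) * (2 * real k)^2 * (2 * real k + 1)))
      sums (1 - pi^2 / 24 - (real r)^2 * (ln gr_alpha)^2 / 4 + (ln (Luc r))^2 / 4
            - sqrt (1 / (gr_alpha ^ (3 * r) * Luc r)) / 2 * artanh (sqrt (gr_alpha ^ r / Luc r))
            - sqrt (gr_alpha ^ (3 * r) / Luc r) / 2 * artanh (sqrt (1 / (gr_alpha ^ r * Luc r)))))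
   \<and> (summable (\<lambda>n. let k = Suc n in Luc (2 * k) / (5 ^ k * (4 * real k - 1) * (4 * real k)^2 * (4 * real k + 1)))
    \<and> summable (\<lambda>n. let k = Suc n in Fib (2 * k - 1) / (5 ^ (k - 1) * (4 * real k - 3) * (4 * real k - 2)^2 * (4 * real k - 1)))
    \<and> (\<Sum>n. let k = Suc n in Luc (2 * k) / (5 ^ k * (4 * real k - 1) * (4 * real k)^2 * (4 * real k + 1)))
      + (\<Sum>n. let k = Suc n in Fib (2 * k - 1) / (5 ^ (k - 1) * (4 * real k - 3) * (4 * real k - 2)^2 * (4 * real k - 1)))
      = 1 - pi^2 / 24 + (ln 5)^2 / 16 - (ln gr_alpha)^2 / 4
        - 1 / (2 * sqrt (sqrt 5)) * (1 / (gr_alpha * sqrt gr_alpha) * artanh (sqrt (gr_alpha / sqrt 5))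
                                    + gr_alpha * sqrt gr_alpha * artanh (sqrt (1 / (sqrt 5 * gr_alpha)))))
   \<and> ((\<lambda>n. let k = Suc n in Luc (2 * k) / (4 ^ (k + 1) * (2 * real k - 1) * (real k)^2 * (2 * real k + 1)))
      sums (1 - pi^2 / 24 - (ln gr_alpha)^2 / 2 - 9 * sqrt 5 / 8 * ln gr_alpha + 5 / 16 * ln 5
            + (ln 5)^2 / 8 - ln 2 * ln 5 / 2 + (ln 2)^2 + Li2 (1 / 5) / 4))"
    by (rule conjI[OF part1 conjI[OF part2 conjI[OF part3 conjI[OF part4 part5]]]])

end
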